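(* Let $(\mathcal A,\mathcal B)$ be a nice $(\theta,\theta)$ pair and let $\mathcal R$ be a partial order with the $\kappa$-chain condition and $|\mathcal R|<\theta$. Then $\mathcal R$ is dangerous for $(\mathcal A,\mathcal B)$ if and only if there exist a family $Y=\{y_i:i<\theta\}$ of pairwise disjoint finite subsets of $\theta$ and a $Y$-sequence $T$ such that $\mathcal R\times\mathcal Q(Y,T)$ does not have the $\kappa$-chain condition.
   Context: Standing assumptions: $\theta$ is a singular cardinal of uncountable cofinality, $\kappa=\mathrm{cf}(\theta)$, and $\langle\theta_\alpha:\alpha<\kappa\rangle$ is a fixed increasing sequence of cardinals converging to $\theta$ with $\theta_0>\kappa$. A $(\theta,\theta)$ pair is $(\mathcal A,\mathcal B)$ with $\mathcal A=\{a_\xi:\xi<\theta\}$, $\mathcal B=\{b_\xi:\xi<\theta\}$ subsets of $\omega$ such that $a_\xi\cap b_\eta$ is finite for all $\xi,\eta<\theta$. For finite $x\subseteq\theta$, $a(x)=\bigcap_{\xi\in x}a_\xi$, $b(x)=\bigcap_{\xi\in x}b_\xi$, with $a(\emptyset)=b(\emptyset)=\omega$. The pair is nice if for every family $\{x_i:i<\theta\}$ of pairwise disjoint finite subsets of $\theta$ there are $i,j<\theta$ with $a(x_i)\cap b(x_j)\ne\emptyset$. Given a family $X=\{x_i:i<\theta\}$ of pairwise disjoint finite subsets of $\theta$, an $X$-sequence is $S=\{S_\alpha:\alpha<\kappa\}$ where the $S_\alpha$ are pairwise disjoint subsets of $\theta$, $|S_\alpha|>\theta_\alpha$, and $a(x_i)\cap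 b(x_j)=\emptyset$ for all $i,j\in S_\alpha$, for every $\alpha<\kappa$. $\mathcal Q(X,S)$ is the set of finite $F\subseteq\kappa$ such that for all distinct $\alpha,\beta\in F$ there exist $i\in S_\alpha$, $j\in S_\beta$ with $a(x_i)\cap b(x_j)\neq\emptyset$ or $b(x_i)\cap a(x_j)\ne\emptyset$; it is ordered by inclusion. For a nice pair $(\mathcal A,\mathcal B)$, a partial order $\mathcal R$ is dangerous for $(\mathcal A,\mathcal B)$ if there is $r\in\mathcal R$ with $r\Vdash_{\mathcal R}$ "$(\mathcal A,\mathcal B)$ is not nice" (niceness evaluated in the forcing extension). *)

theory Defs
  imports Main
begin

abbreviation card_lt :: "'a set \<Rightarrow> 'b set \<Rightarrow> bool" where
  "card_lt A B \<equiv> (BNF_Cardinal_Order_Relation.card_of A, BNF_Cardinal_Order_Relation.card_of B)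
       \<in> BNF_Wellorder_Constructions.ordLess"
abbreviation card_le :: "'a set \<Rightarrow> 'b set \<Rightarrow> bool" where
  "card_le A B \<equiv> (BNF_Cardinal_Order_Relation.card_of A, BNF_Cardinal_Order_Relation.card_of B)
       \<in> BNF_Wellorder_Constructions.ordLeq"
abbreviation card_eq :: "'a set \<Rightarrow> 'b set \<Rightarrow> bool" where
  "card_eq A B \<equiv> (BNF_Cardinal_Order_Relation.card_of A, BNF_Cardinal_Order_Relation.card_of B)
       \<in> BNF_Wellorder_Constructions.ordIso"

text \<open>The cardinal theta is represented by an
index set Th; its initial well-order card_of Th is the ordinal theta.\<close>

definition is_cofinality :: "'a set \<Rightarrow> 'k set \<Rightarrow> bool" where
  "is_cofinality Th K \<longleftrightarrow>
     (\<exists>X. X \<subseteq> Th \<and> BNF_Cardinal_Order_Relation.cofinal X (BNF_Cardinal_Order_Relation.card_of Th) \<and> card_eq X K) \<and>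
     (\<forall>X. X \<subseteq> Th \<and> BNF_Cardinal_Order_Relation.cofinal X (BNF_Cardinal_Order_Relation.card_of Th) \<longrightarrow> card_le K X)"

text \<open>a(x) = intersection of the a_xi for xi in x, with a(empty) = omega.\<close>
definition Int_of :: "('a \<Rightarrow> nat set) \<Rightarrow> 'a set \<Rightarrow> nat set" where
  "Int_of a x = {n. \<forall>\<xi>\<in>x. n \<in> a \<xi>}"

definition theta_pair :: "'a set \<Rightarrow> ('a \<Rightarrow> nat set) \<Rightarrow> ('a \<Rightarrow> nat set) \<Rightarrow> bool" where
  "theta_pair Th a b \<longleftrightarrow> (\<forall>\<xi>\<in>Th. \<forall>\<eta>\<in>Th. finite (a \<xi> \<inter> b \<eta>))"

definition disj_fin_family :: "'a set \<Rightarrow> ('a \<Rightarrow> 'a set) \<Rightarrow> bool" where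
  "disj_fin_family Th x \<longleftrightarrow>
     (\<forall>i\<in>Th. finite (x i) \<and> x i \<subseteq> Th) \<and>
     (\<forall>i\<in>Th. \<forall>j\<in>Th. i \<noteq> j \<longrightarrow> x i \<inter> x j = {})"

definition nice :: "'a set \<Rightarrow> ('a \<Rightarrow> nat set) \<Rightarrow> ('a \<Rightarrow> nat set) \<Rightarrow> bool" where
  "nice Th a b \<longleftrightarrow>
     (\<forall>x. disj_fin_family Th x \<longrightarrow>
        (\<exists>i\<in>Th. \<exists>j\<in>Th. Int_of a (x i) \<inter> Int_of b (x j) \<noteq> {}))"

text \<open>Partial orders: le p q means p is stronger than (extends) q.\<close>
definition partial_order_on' :: "'r set \<Rightarrow> ('r \<Rightarrow> 'r \<Rightarrow> bool) \<Rightarrow> bool" where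
  "partial_order_on' P le \<longleftrightarrow>
     (\<forall>p\<in>P. le p p) \<and>
     (\<forall>p\<in>P. \<forall>q\<in>P. \<forall>s\<in>P. le p q \<and> le q s \<longrightarrow> le p s) \<and>
     (\<forall>p\<in>P. \<forall>q\<in>P. le p q \<and> le q p \<longrightarrow> p = q)"

definition compat :: "'r set \<Rightarrow> ('r \<Rightarrow> 'r \<Rightarrow> bool) \<Rightarrow> 'r \<Rightarrow> 'r \<Rightarrow> bool" where
  "compat P le p q \<longleftrightarrow> (\<exists>s\<in>P. le s p \<and> le s q)"

definition antichain :: "'r set \<Rightarrow> ('r \<Rightarrow> 'r \<Rightarrow> bool) \<Rightarrow> 'r set \<Rightarrow> bool" where
  "antichain P le A \<longleftrightarrow> A \<subseteq> P \<and> (\<forall>p\<in>A. \<forall>q\<in>A. p \<noteq> q \<longrightarrow> \<not> compat P le p q)"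

definition chain_cond :: "'r set \<Rightarrow> ('r \<Rightarrow> 'r \<Rightarrow> bool) \<Rightarrow> 'k set \<Rightarrow> bool" where
  "chain_cond P le K \<longleftrightarrow> (\<forall>A. antichain P le A \<longrightarrow> card_lt A K)"

definition prod_le :: "('r \<Rightarrow> 'r \<Rightarrow> bool) \<Rightarrow> ('q \<Rightarrow> 'q \<Rightarrow> bool) \<Rightarrow> 'r \<times> 'q \<Rightarrow> 'r \<times> 'q \<Rightarrow> bool" where
  "prod_le le1 le2 u v \<longleftrightarrow> le1 (fst u) (fst v) \<and> le2 (snd u) (snd v)"

definition X_sequence :: "'a set \<Rightarrow> 'k set \<Rightarrow> ('k \<Rightarrow> 'a set) \<Rightarrow> ('a \<Rightarrow> nat set) \<Rightarrow>
    ('a \<Rightarrow> nat set) \<Rightarrow> ('a \<Rightarrow> 'a set) \<Rightarrow> ('k \<Rightarrow> 'a set) \<Rightarrow> bool" where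
  "X_sequence Th K thseq a b x S \<longleftrightarrow>
     (\<forall>\<alpha>\<in>K. S \<alpha> \<subseteq> Th) \<and>
     (\<forall>\<alpha>\<in>K. \<forall>\<beta>\<in>K. \<alpha> \<noteq> \<beta> \<longrightarrow> S \<alpha> \<inter> S \<beta> = {}) \<and>
     (\<forall>\<alpha>\<in>K. card_lt (thseq \<alpha>) (S \<alpha>)) \<and>
     (\<forall>\<alpha>\<in>K. \<forall>i\<in>S \<alpha>. \<forall>j\<in>S \<alpha>. Int_of a (x i) \<inter> Int_of b (x j) = {})"

definition Q_set :: "'k set \<Rightarrow> ('a \<Rightarrow> nat set) \<Rightarrow> ('a \<Rightarrow> nat set) \<Rightarrow>
    ('a \<Rightarrow> 'a set) \<Rightarrow> ('k \<Rightarrow> 'a set) \<Rightarrow> 'k set set" where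
  "Q_set K a b x S = {F. finite F \<and> F \<subseteq> K \<and>
     (\<forall>\<alpha>\<in>F. \<forall>\<beta>\<in>F. \<alpha> \<noteq> \<beta> \<longrightarrow>
        (\<exists>i\<in>S \<alpha>. \<exists>j\<in>S \<beta>. Int_of a (x i) \<inter> Int_of b (x j) \<noteq> {} \<or>
                          Int_of b (x i) \<inter> Int_of a (x j) \<noteq> {}))}"

definition Q_le :: "'k set \<Rightarrow> 'k set \<Rightarrow> bool" where
  "Q_le F G \<longleftrightarrow> G \<subseteq> F"

text \<open>The forcing relation for the sentence "(A,B) is not nice", i.e.
 r forces: there is a family {x_i : i < theta} of pairwise disjoint finite subsets
 of theta with a(x_i) cap b(x_j) empty for all i, j.  Since the x_i are finite sets
 of ordinals (ground model objects), a name for such a family is given by, for each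
 i, a set N i of pairs (p, x) (condition, value) whose conditions are predense
 below r and such that compatible conditions carry consistent values.\<close>
definition forces_not_nice :: "'r set \<Rightarrow> ('r \<Rightarrow> 'r \<Rightarrow> bool) \<Rightarrow> 'a set \<Rightarrow>
    ('a \<Rightarrow> nat set) \<Rightarrow> ('a \<Rightarrow> nat set) \<Rightarrow> 'r \<Rightarrow> bool" where
  "forces_not_nice P le Th a b r \<longleftrightarrow>
     (\<exists>N :: 'a \<Rightarrow> ('r \<times> 'a set) set.
        (\<forall>i\<in>Th. \<forall>(p, x)\<in>N i. p \<in> P \<and> le p r \<and> finite x \<and> x \<subseteq> Th) \<and>
        (\<forall>i\<in>Th. \<forall>q\<in>P. le q r \<longrightarrow> (\<exists>(p, x)\<in>N i. compat P le q p)) \<and>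
        (\<forall>i\<in>Th. \<forall>j\<in>Th. \<forall>(p, x)\<in>N i. \<forall>(q, y)\<in>N j. compat P le p q \<longrightarrow>
            (i = j \<longrightarrow> x = y) \<and> (i \<noteq> j \<longrightarrow> x \<inter> y = {}) \<and>
            Int_of a x \<inter> Int_of b y = {}))"

definition dangerous :: "'r set \<Rightarrow> ('r \<Rightarrow> 'r \<Rightarrow> bool) \<Rightarrow> 'a set \<Rightarrow>
    ('a \<Rightarrow> nat set) \<Rightarrow> ('a \<Rightarrow> nat set) \<Rightarrow> bool" where
  "dangerous P le Th a b \<longleftrightarrow> (\<exists>r\<in>P. forces_not_nice P le Th a b r)"

end

theory Submission
  imports Defs
begin

unbundle cardinal_syntax

lemma co_wo: "wo_rel |A|"
  using card_of_Well_order wo_rel_def by blast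

lemma co_field: "(x,y) \<in> |A| \<Longrightarrow> x \<in> A \<and> y \<in> A"
  by (metis Field_card_of FieldI1 FieldI2)

lemma co_refl: "x \<in> A \<Longrightarrow> (x,x) \<in> |A|"
  by (metis Field_card_of co_wo wo_rel.REFL refl_onD)

lemma co_total: "x \<in> A \<Longrightarrow> y \<in> A \<Longrightarrow> (x,y) \<in> |A| \<or> (y,x) \<in> |A|"
  by (metis Field_card_of co_wo wo_rel.TOTALS)

lemma co_antisym: "(x,y) \<in> |A| \<Longrightarrow> (y,x) \<in> |A| \<Longrightarrow> x = y"
  by (metis co_wo wo_rel.ANTISYM antisymD)

lemma co_trans: "(x,y) \<in> |A| \<Longrightarrow> (y,z) \<in> |A| \<Longrightarrow> (x,z) \<in> |A|"
  by (metis co_wo wo_rel.TRANS transD)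

lemma co_minim:
  assumes "B \<subseteq> A" "b \<in> B"
  shows "wo_rel.minim (card_of A) B \<in> B \<and> (\<forall>c\<in>B. (wo_rel.minim (card_of A) B, c) \<in> card_of A)"
  using assms wo_rel.minim_in[OF co_wo, of B A] wo_rel.minim_least[OF co_wo, of B A]
  by (auto simp: Field_card_of)

lemma finite_lt_infinite: "finite X \<Longrightarrow> infinite A \<Longrightarrow> |X| <o |A|"
proof -
  assume "finite X" "infinite A"
  hence "\<not> |A| \<le>o |X|" using card_of_ordLeq_finite by blast
  thus ?thesis using not_ordLeq_iff_ordLess[OF card_of_Well_order card_of_Well_order] by blast
qed

lemma not_lt_iff: "(\<not> |A| <o |B| ) = ( |B| \<le>o |A| )"
  by (rule not_ordLess_iff_ordLeq[OF card_of_Well_order card_of_Well_order])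

lemma under_small:
  assumes "infinite A" "x \<in> A"
  shows "|{y. (y,x) \<in> card_of A}| <o |A|"
proof -
  have 1: "|underS (card_of A) x| <o |A|"
    using card_of_underS[of "|A|" x] card_of_card_order_on[of A] assms by (simp add: Field_card_of)
  have 2: "|{x}| <o |A|" using finite_lt_infinite assms by blast
  have "{y. (y,x) \<in> card_of A} \<subseteq> underS (card_of A) x \<union> {x}"
    by (auto simp: underS_def)
  hence "|{y. (y,x) \<in> card_of A}| \<le>o |underS (card_of A) x \<union> {x}|" by (rule card_of_mono1)
  moreover have "|underS (card_of A) x \<union> {x}| <o |A|"
    using card_of_Un_ordLess_infinite[OF assms(1) 1 2] .
  ultimately show ?thesis using ordLeq_ordLess_trans by blast
qed

lemma inj_of_le: "|A| \<le>o |B| \<Longrightarrow> \<exists>f. inj_on f A \<and> f ` A \<subseteq> B"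
  using card_of_ordLeq by blast

lemma le_of_inj: "inj_on f A \<Longrightarrow> f ` A \<subseteq> B \<Longrightarrow> |A| \<le>o |B|"
  using card_of_ordLeq by blast

lemma Un_le_inf: "infinite C \<Longrightarrow> |A| \<le>o |C| \<Longrightarrow> |B| \<le>o |C| \<Longrightarrow> |A \<union> B| \<le>o |C|"
  apply (rule card_of_Un_ordLeq_infinite_Field)
  apply (auto simp: Field_card_of card_of_card_order_on)
  done

lemma finite_le_infinite: "finite X \<Longrightarrow> infinite A \<Longrightarrow> |X| \<le>o |A|"
  using finite_lt_infinite ordLess_imp_ordLeq by blast

lemma UN_le_inf:
  assumes "infinite B" "|I| \<le>o |B|" "\<And>i. i \<in> I \<Longrightarrow> |A i| \<le>o |B|"
  shows "|\<Union>i\<in>I. A i| \<le>o |B|"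
  using card_of_UNION_ordLeq_infinite[of B I A] assms by blast

lemma le_inj_image: "inj_on f A \<Longrightarrow> |f ` A| =o |A|"
  using card_of_image[of f A] card_of_ordLeq[of A "f ` A"] ordIso_iff_ordLeq by blast



locale L =
  fixes Th :: "'a set" and K :: "'k set" and thseq :: "'k \<Rightarrow> 'a set"
    and a b :: "'a \<Rightarrow> nat set" and R :: "'r set" and le :: "'r \<Rightarrow> 'r \<Rightarrow> bool"
  assumes theta_inf: "infinite Th"
    and kappa_cf: "is_cofinality Th K"
    and singular: "card_lt K Th"
    and uncountable_cf: "card_lt (UNIV :: nat set) K"
    and thseq_below: "\<forall>\<alpha>\<in>K. card_lt (thseq \<alpha>) Th"
    and thseq_incr: "\<forall>\<alpha>\<in>K. \<forall>\<beta>\<in>K. (\<alpha>, \<beta>) \<in> BNF_Cardinal_Order_Relation.card_of K \<and> \<alpha> \<noteq> \<beta> \<longrightarrow>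
                        card_lt (thseq \<alpha>) (thseq \<beta>)"
    and thseq_conv: "\<forall>Z. Z \<subseteq> Th \<and> card_lt Z Th \<longrightarrow> (\<exists>\<alpha>\<in>K. card_le Z (thseq \<alpha>))"
    and thseq_0: "\<forall>\<alpha>0\<in>K. (\<forall>\<beta>\<in>K. (\<alpha>0, \<beta>) \<in> BNF_Cardinal_Order_Relation.card_of K) \<longrightarrow> card_lt K (thseq \<alpha>0)"
    and pair: "theta_pair Th a b"
    and is_nice: "nice Th a b"
    and R_po: "partial_order_on' R le"
    and R_cc: "chain_cond R le K"
    and R_small: "card_lt R Th"
begin

lemma K_inf: "infinite K"
  using uncountable_cf infinite_iff_card_of_nat ordLess_imp_ordLeq by blast

lemma Th_bounded:
  assumes "Z \<subseteq> Th" "|Z| <o |K|"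
  shows "\<exists>u\<in>Th. \<forall>t\<in>Z. (t,u) \<in> card_of Th"
proof -
  have min: "\<And>X. X \<subseteq> Th \<Longrightarrow> cofinal X |Th| \<Longrightarrow> |K| \<le>o |X|"
    using kappa_cf unfolding is_cofinality_def by blast
  have "\<not> cofinal Z |Th|"
    using min[OF assms(1)] assms(2) not_ordLess_ordLeq by blast
  then obtain u where u: "u \<in> Th" "\<forall>t\<in>Z. u = t \<or> (u,t) \<notin> card_of Th"
    unfolding cofinal_def Field_card_of by blast
  have "\<forall>t\<in>Z. (t,u) \<in> card_of Th"
  proof
    fix t assume "t \<in> Z"
    hence "t \<in> Th" using assms by blast
    have "u = t \<or> (u,t) \<notin> card_of Th" using u `t \<in> Z` by blast
    thus "(t,u) \<in> card_of Th"
    proof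
      assume "u = t" thus ?thesis using co_refl[OF `t \<in> Th`] by simp
    next
      assume "(u,t) \<notin> card_of Th" thus ?thesis using co_total[OF `t \<in> Th` u(1)] by blast
    qed
  qed
  thus ?thesis using u by blast
qed

lemma K_regular: "regularCard |K|"
  unfolding regularCard_def Field_card_of
proof (intro allI impI)
  fix Z assume Z: "Z \<subseteq> K \<and> cofinal Z |K|"
  have min: "\<And>X. X \<subseteq> Th \<Longrightarrow> cofinal X |Th| \<Longrightarrow> |K| \<le>o |X|"
    using kappa_cf unfolding is_cofinality_def by blast
  obtain X where X: "X \<subseteq> Th" "cofinal X |Th|" "|X| =o |K|"
    using kappa_cf unfolding is_cofinality_def by blast
  obtain e where e: "bij_betw e K X"
    using X(3) ordIso_symmetric card_of_ordIso by blast
  have "|Z| \<le>o |K|" using Z card_of_mono1 by blast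
  moreover have "\<not> |Z| <o |K|"
  proof
    assume Zs: "|Z| <o |K|"
    have "\<forall>z\<in>Z. \<exists>u\<in>Th. \<forall>t\<in>e ` {d. (d,z) \<in> card_of K}. (t,u) \<in> card_of Th"
    proof
      fix z assume "z \<in> Z"
      hence zK: "z \<in> K" using Z by blast
      have "e ` {d. (d,z) \<in> card_of K} \<subseteq> Th"
        using e X(1) co_field[of _ z K] unfolding bij_betw_def by blast
      moreover have "|e ` {d. (d,z) \<in> card_of K}| <o |K|"
        using card_of_image under_small[OF K_inf zK] ordLeq_ordLess_trans by blast
      ultimately show "\<exists>u\<in>Th. \<forall>t\<in>e ` {d. (d,z) \<in> card_of K}. (t,u) \<in> card_of Th"
        by (rule Th_bounded)
    qed
    then obtain u where u: "\<forall>z\<in>Z. u z \<in> Th \<and> (\<forall>t\<in>e ` {d. (d,z) \<in> card_of K}. (t,u z) \<in> card_of Th)"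
      by metis
    have "cofinal (u ` Z) |Th|"
      unfolding cofinal_def Field_card_of
    proof
      fix c assume "c \<in> Th"
      then obtain x where x: "x \<in> X" "c \<noteq> x" "(c,x) \<in> card_of Th"
        using X(2) unfolding cofinal_def Field_card_of by blast
      then obtain d where d: "d \<in> K" "x = e d" using e unfolding bij_betw_def by blast
      then obtain z where z: "z \<in> Z" "d \<noteq> z" "(d,z) \<in> card_of K"
        using Z unfolding cofinal_def Field_card_of by blast
      have xu: "(x, u z) \<in> card_of Th" using u z d by blast
      have cu: "(c, u z) \<in> card_of Th" using co_trans[OF x(3) xu] .
      have "c \<noteq> u z" using co_antisym[OF x(3)] xu x(2) by blast
      thus "\<exists>b\<in>u ` Z. c \<noteq> b \<and> (c, b) \<in> card_of Th" using cu z by blast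
    qed
    hence "|K| \<le>o |u ` Z|" using min u by blast
    moreover have "|u ` Z| <o |K|" using card_of_image Zs ordLeq_ordLess_trans by blast
    ultimately show False using not_ordLess_ordLeq by blast
  qed
  ultimately show "|Z| =o |K|" using ordLeq_iff_ordLess_or_ordIso by blast
qed

lemma K_stable: "stable |K|"
  using regularCard_stable[of "|K|"] K_regular K_inf card_of_card_order_on[of K] by (simp add: Field_card_of)

lemma K_union:
  assumes "|I| <o |K|" "\<And>i. i \<in> I \<Longrightarrow> |A i| <o |K|"
  shows "|\<Union>i\<in>I. A i| <o |K|"
  using card_of_UNION_ordLess_infinite[OF K_stable] assms by blast

lemma K_bounded:
  assumes "Z \<subseteq> K" "|Z| <o |K|"
  shows "\<exists>g\<in>K. \<forall>z\<in>Z. (z,g) \<in> card_of K"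
proof -
  have "\<not> cofinal Z |K|"
    using K_regular assms unfolding regularCard_def Field_card_of
    using not_ordLess_ordIso by blast
  then obtain u where u: "u \<in> K" "\<forall>t\<in>Z. u = t \<or> (u,t) \<notin> card_of K"
    unfolding cofinal_def Field_card_of by blast
  have "\<forall>t\<in>Z. (t,u) \<in> card_of K"
  proof
    fix t assume "t \<in> Z"
    hence tK: "t \<in> K" using assms by blast
    have "u = t \<or> (u,t) \<notin> card_of K" using u `t \<in> Z` by blast
    thus "(t,u) \<in> card_of K"
    proof
      assume "u = t" thus ?thesis using co_refl[OF tK] by simp
    next
      assume "(u,t) \<notin> card_of K" thus ?thesis using co_total[OF tK u(1)] by blast
    qed
  qed
  thus ?thesis using u by blast
qed

end


context L begin

lemma thseq_mono:
  assumes "x \<in> K" "y \<in> K" "(x,y) \<in> card_of K"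
  shows "|thseq x| \<le>o |thseq y|"
proof (cases "x = y")
  case True thus ?thesis using card_of_mono1[of "thseq x" "thseq x"] by simp
next
  case False thus ?thesis using thseq_incr assms ordLess_imp_ordLeq by blast
qed

lemma K_ne: "K \<noteq> {}" using K_inf by auto

lemma thseq_big:
  assumes "x \<in> K" shows "|K| <o |thseq x|"
proof -
  obtain k where "k \<in> K" using K_ne by blast
  define m where "m = wo_rel.minim (card_of K) K"
  have m: "m \<in> K" "\<forall>c\<in>K. (m,c) \<in> card_of K"
    using co_minim[of K K k] `k \<in> K` m_def by auto
  have "|K| <o |thseq m|" using thseq_0 m by blast
  thus ?thesis using thseq_mono[OF m(1) assms] m(2) assms ordLess_ordLeq_trans by blast
qed

lemma thseq_inf: "x \<in> K \<Longrightarrow> infinite (thseq x)"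
  using thseq_big K_inf card_of_ordLeq_infinite ordLess_imp_ordLeq by blast

lemma K_le_thseq: "x \<in> K \<Longrightarrow> |K| \<le>o |thseq x|"
  using thseq_big ordLess_imp_ordLeq by blast

lemma sK_ex:
  assumes "x \<in> K"
  shows "\<exists>s\<in>K. (x,s) \<in> card_of K \<and> x \<noteq> s \<and> (\<forall>z\<in>K. (x,z) \<in> card_of K \<and> x \<noteq> z \<longrightarrow> (s,z) \<in> card_of K)"
proof -
  have "\<exists>z\<in>K. x \<noteq> z \<and> (x,z) \<in> card_of K"
    using infinite_Card_order_limit[of "|K|" x] card_of_Card_order[of K] K_inf assms
    by (simp add: Field_card_of)
  then obtain z where z: "z \<in> {z\<in>K. (x,z) \<in> card_of K \<and> x \<noteq> z}" by blast
  define s where "s = wo_rel.minim (card_of K) {z\<in>K. (x,z) \<in> card_of K \<and> x \<noteq> z}"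
  have "s \<in> {z\<in>K. (x,z) \<in> card_of K \<and> x \<noteq> z} \<and> (\<forall>c\<in>{z\<in>K. (x,z) \<in> card_of K \<and> x \<noteq> z}. (s,c) \<in> card_of K)"
    unfolding s_def by (rule co_minim[OF _ z]) blast
  thus ?thesis by blast
qed

lemma R_in_thseq: "\<exists>x\<in>K. |R| \<le>o |thseq x|"
proof -
  obtain f where f: "inj_on f R" "f ` R \<subseteq> Th"
    using inj_of_le[OF ordLess_imp_ordLeq[OF R_small]] by blast
  have "|f ` R| <o |Th|" using card_of_image R_small ordLeq_ordLess_trans by blast
  then obtain x where "x \<in> K" "|f ` R| \<le>o |thseq x|" using thseq_conv f(2) by blast
  moreover have "|R| \<le>o |f ` R|" using le_inj_image[OF f(1)] ordIso_iff_ordLeq by blast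
  ultimately show ?thesis using ordLeq_transitive[of "|R|" "|f ` R|"] by blast
qed

lemma compat_refl: "p \<in> R \<Longrightarrow> compat R le p p"
  using R_po unfolding compat_def partial_order_on'_def by blast

lemma compat_sym: "compat R le p q \<Longrightarrow> compat R le q p"
  unfolding compat_def by blast

lemma le_trans': "p \<in> R \<Longrightarrow> q \<in> R \<Longrightarrow> s \<in> R \<Longrightarrow> le p q \<Longrightarrow> le q s \<Longrightarrow> le p s"
  using R_po unfolding partial_order_on'_def by blast

lemma le_refl': "p \<in> R \<Longrightarrow> le p p"
  using R_po unfolding partial_order_on'_def by blast

lemma Int_of_empty: "Int_of a {} \<inter> Int_of b {} \<noteq> {}"
  unfolding Int_of_def by simp

lemma Int_of_mono: "x \<subseteq> y \<Longrightarrow> Int_of c y \<subseteq> Int_of c x"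
  unfolding Int_of_def by blast

end


context L begin

lemma fwd:
  assumes "dangerous R le Th a b"
  shows "\<exists>y T. disj_fin_family Th y \<and> X_sequence Th K thseq a b y T \<and>
       \<not> chain_cond (R \<times> Q_set K a b y T) (prod_le le Q_le) K"
proof -
  from assms obtain r where r: "r \<in> R" "forces_not_nice R le Th a b r"
    unfolding dangerous_def by blast
  from r(2)[unfolded forces_not_nice_def] obtain N where NN:
        "(\<forall>i\<in>Th. \<forall>(p, x)\<in>N i. p \<in> R \<and> le p r \<and> finite x \<and> x \<subseteq> Th) \<and>
    (\<forall>i\<in>Th. \<forall>q\<in>R. le q r \<longrightarrow> (\<exists>(p, x)\<in>N i. compat R le q p)) \<and>
    (\<forall>i\<in>Th. \<forall>j\<in>Th. \<forall>(p, x)\<in>N i. \<forall>(q, y)\<in>N j. compat R le p q \<longrightarrow>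
            (i = j \<longrightarrow> x = y) \<and> (i \<noteq> j \<longrightarrow> x \<inter> y = {}) \<and>
            Int_of a x \<inter> Int_of b y = {})" ..
  note N1 = NN[THEN conjunct1] and N2 = NN[THEN conjunct2, THEN conjunct1]
    and N3 = NN[THEN conjunct2, THEN conjunct2]
  have "\<forall>i\<in>Th. \<exists>px. px \<in> N i"
  proof
    fix i assume "i \<in> Th"
    hence "\<exists>(p, x)\<in>N i. compat R le r p" using N2 r(1) le_refl'[OF r(1)] by blast
    thus "\<exists>px. px \<in> N i" by blast
  qed
  from bchoice[OF this] obtain f where f: "\<forall>i\<in>Th. f i \<in> N i" ..
  define pp where "pp i = fst (f i)" for i
  define xx where "xx i = snd (f i)" for i
  have pxN: "(pp i, xx i) \<in> N i" if "i \<in> Th" for i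
    using f that unfolding pp_def xx_def by simp
  have N1i: "pp i \<in> R \<and> le (pp i) r \<and> finite (xx i) \<and> xx i \<subseteq> Th" if "i \<in> Th" for i
    using bspec[OF bspec[OF N1 that] pxN[OF that]] by simp
  have ppR: "\<And>i. i \<in> Th \<Longrightarrow> pp i \<in> R" and xxfin: "\<And>i. i \<in> Th \<Longrightarrow> finite (xx i)"
    and xxTh: "\<And>i. i \<in> Th \<Longrightarrow> xx i \<subseteq> Th"
    using N1i by blast+
  have C: "(i \<noteq> j \<longrightarrow> xx i \<inter> xx j = {}) \<and> Int_of a (xx i) \<inter> Int_of b (xx j) = {}"
    if "i \<in> Th" "j \<in> Th" "compat R le (pp i) (pp j)" for i j
  proof -
    have h2: "\<forall>(q, y)\<in>N j. compat R le (pp i) q \<longrightarrow>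
            (i = j \<longrightarrow> xx i = y) \<and> (i \<noteq> j \<longrightarrow> xx i \<inter> y = {}) \<and>
            Int_of a (xx i) \<inter> Int_of b y = {}"
      using bspec[OF bspec[OF bspec[OF N3 that(1)] that(2)] pxN[OF that(1)]] by simp
    hence "compat R le (pp i) (pp j) \<longrightarrow>
            (i = j \<longrightarrow> xx i = xx j) \<and> (i \<noteq> j \<longrightarrow> xx i \<inter> xx j = {}) \<and>
            Int_of a (xx i) \<inter> Int_of b (xx j) = {}"
      using bspec[OF h2 pxN[OF that(2)]] by simp
    thus ?thesis using that(3) by blast
  qed
  have xxne: "xx i \<noteq> {}" if "i \<in> Th" for i
    using C[OF that that compat_refl[OF ppR[OF that]]] Int_of_empty by auto
  define Phi where "Phi p = {i\<in>Th. pp i = p}" for p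
  have fibdisj: "xx i \<inter> xx j = {}" if "i \<in> Phi p" "j \<in> Phi p" "i \<noteq> j" for i j p
  proof -
    have "i \<in> Th" "j \<in> Th" "pp i = p" "pp j = p" using that unfolding Phi_def by auto
    thus ?thesis using C[of i j] compat_refl[OF ppR[of i]] that(3) by auto
  qed
  have big_fiber: "\<exists>p\<in>R. |thseq x| <o |Phi p|" if xK: "x \<in> K" for x
  proof (rule ccontr)
    assume H: "\<not> (\<exists>p\<in>R. |thseq x| <o |Phi p| )"
    obtain z where z: "z \<in> K" "|R| \<le>o |thseq z|" using R_in_thseq by blast
    obtain g where g: "g \<in> K" "(x,g) \<in> card_of K" "(z,g) \<in> card_of K"
    proof (cases "(x,z) \<in> card_of K")
      case True thus ?thesis using that[of z] z co_refl[of z K] by blast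
    next
      case False
      hence "(z,x) \<in> card_of K" using co_total[OF xK z(1)] by blast
      thus ?thesis using that[of x] xK co_refl[of x K] by blast
    qed
    have "|thseq x| \<le>o |thseq g|" using thseq_mono[OF xK g(1) g(2)] .
    have Pb: "|Phi p| \<le>o |thseq g|" if "p \<in> R" for p
    proof -
      have "\<not> |thseq x| <o |Phi p|" using H that by blast
      hence "|Phi p| \<le>o |thseq x|" using not_lt_iff by blast
      thus ?thesis using `|thseq x| \<le>o |thseq g|` by (rule ordLeq_transitive)
    qed
    have "|R| \<le>o |thseq g|" using ordLeq_transitive[OF z(2) thseq_mono[OF z(1) g(1) g(3)]] .
    hence U1: "|\<Union>p\<in>R. Phi p| \<le>o |thseq g|" using UN_le_inf[OF thseq_inf[OF g(1)]] Pb by blast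
    have U2: "Th \<subseteq> (\<Union>p\<in>R. Phi p)" using ppR unfolding Phi_def by blast
    have "|Th| \<le>o |thseq g|" using ordLeq_transitive[OF card_of_mono1[OF U2] U1] .
    thus False using thseq_below g(1) not_ordLess_ordLeq by blast
  qed
  obtain sK where sK: "\<And>x. x \<in> K \<Longrightarrow> sK x \<in> K \<and> (x, sK x) \<in> card_of K \<and> x \<noteq> sK x \<and>
      (\<forall>z\<in>K. (x,z) \<in> card_of K \<and> x \<noteq> z \<longrightarrow> (sK x, z) \<in> card_of K)"
  proof -
    have "\<forall>x\<in>K. \<exists>s. s \<in> K \<and> (x,s) \<in> card_of K \<and> x \<noteq> s \<and> (\<forall>z\<in>K. (x,z) \<in> card_of K \<and> x \<noteq> z \<longrightarrow> (s,z) \<in> card_of K)"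
      using sK_ex by blast
    from bchoice[OF this] obtain f where "\<forall>x\<in>K. f x \<in> K \<and> (x,f x) \<in> card_of K \<and> x \<noteq> f x \<and> (\<forall>z\<in>K. (x,z) \<in> card_of K \<and> x \<noteq> z \<longrightarrow> (f x,z) \<in> card_of K)" ..
    thus ?thesis using that by blast
  qed
  have PT0: "\<exists>p T'. p \<in> R \<and> T' \<subseteq> Phi p \<and> |thseq x| <o |T'| \<and> |T'| \<le>o |thseq (sK x)|"
    if xK: "x \<in> K" for x
  proof -
    obtain p where p: "p \<in> R" "|thseq x| <o |Phi p|" using big_fiber[OF xK] by blast
    have lt: "|thseq x| <o |thseq (sK x)|" using thseq_incr xK sK[OF xK] by blast
    show ?thesis
    proof (cases "|Phi p| \<le>o |thseq (sK x)|")
      case True thus ?thesis using p by blast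
    next
      case False
      hence "|thseq (sK x)| <o |Phi p|"
        using not_ordLeq_iff_ordLess[OF card_of_Well_order card_of_Well_order] by blast
      then obtain g where g: "inj_on g (thseq (sK x))" "g ` thseq (sK x) \<subseteq> Phi p"
        using inj_of_le[OF ordLess_imp_ordLeq] by blast
      have iso: "|g ` thseq (sK x)| =o |thseq (sK x)|" using le_inj_image[OF g(1)] .
      have "|thseq x| <o |g ` thseq (sK x)|"
        using ordLess_ordIso_trans[OF lt ordIso_symmetric[OF iso]] .
      moreover have "|g ` thseq (sK x)| \<le>o |thseq (sK x)|" using ordIso_imp_ordLeq[OF iso] .
      ultimately show ?thesis using p(1) g(2) by blast
    qed
  qed
  have "\<forall>x\<in>K. \<exists>p. p \<in> R \<and> (\<exists>T'. T' \<subseteq> Phi p \<and> |thseq x| <o |T'| \<and> |T'| \<le>o |thseq (sK x)| )"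
    using PT0 by blast
  from bchoice[OF this] obtain P where P: "\<forall>x\<in>K. P x \<in> R \<and> (\<exists>T'. T' \<subseteq> Phi (P x) \<and> |thseq x| <o |T'| \<and> |T'| \<le>o |thseq (sK x)| )" ..
  hence "\<forall>x\<in>K. \<exists>T'. T' \<subseteq> Phi (P x) \<and> |thseq x| <o |T'| \<and> |T'| \<le>o |thseq (sK x)|" by blast
  from bchoice[OF this] obtain T' where T': "\<forall>x\<in>K. T' x \<subseteq> Phi (P x) \<and> |thseq x| <o |T' x| \<and> |T' x| \<le>o |thseq (sK x)|" ..
  have PT: "P x \<in> R \<and> T' x \<subseteq> Phi (P x) \<and>
      |thseq x| <o |T' x| \<and> |T' x| \<le>o |thseq (sK x)|" if "x \<in> K" for x
    using P T' that by blast
  define T where "T x = {i \<in> T' x. \<forall>z\<in>K. (z,x) \<in> card_of K \<and> z \<noteq> x \<longrightarrow> (\<forall>j\<in>T' z. xx i \<inter> xx j = {})}" for x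
  have T'Th: "T' x \<subseteq> Th" if "x \<in> K" for x using PT[OF that] unfolding Phi_def by blast
  have T'pp: "pp i = P x" if "x \<in> K" "i \<in> T' x" for x i using PT[OF that(1)] that(2) unfolding Phi_def by blast
  have TT': "T x \<subseteq> T' x" for x unfolding T_def by blast
  have Tsize: "|thseq x| <o |T x|" if xK: "x \<in> K" for x
  proof -
    define I where "I = {z\<in>K. (z,x) \<in> card_of K \<and> z \<noteq> x}"
    define U where "U = (\<Union>z\<in>I. \<Union>j\<in>T' z. xx j)"
    have inf: "infinite (thseq x)" using thseq_inf[OF xK] .
    have "|U| \<le>o |thseq x|"
      unfolding U_def
    proof (rule UN_le_inf[OF inf])
      have "|I| \<le>o |K|" unfolding I_def by (rule card_of_mono1) blast
      thus "|I| \<le>o |thseq x|" using K_le_thseq[OF xK] by (rule ordLeq_transitive)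
    next
      fix z assume zI: "z \<in> I"
      hence zK: "z \<in> K" unfolding I_def by blast
      have "(sK z, x) \<in> card_of K" using sK[OF zK] zI xK unfolding I_def by blast
      hence "|thseq (sK z)| \<le>o |thseq x|" using thseq_mono sK[OF zK] xK by blast
      hence T'z: "|T' z| \<le>o |thseq x|" using PT[OF zK] ordLeq_transitive[of "|T' z|" "|thseq (sK z)|"] by blast
      show "|\<Union>j\<in>T' z. xx j| \<le>o |thseq x|"
      proof (rule UN_le_inf[OF inf T'z])
        fix j assume "j \<in> T' z"
        hence "j \<in> Th" using T'Th[OF zK] by blast
        thus "|xx j| \<le>o |thseq x|" using finite_le_infinite[OF xxfin inf] by blast
      qed
    qed
    define Bad where "Bad = T' x - T x"
    have Bad_hit: "\<exists>t. t \<in> xx i \<inter> U" if "i \<in> Bad" for i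
    proof -
      from that obtain z j where "z \<in> K" "(z,x) \<in> card_of K" "z \<noteq> x" "j \<in> T' z" "xx i \<inter> xx j \<noteq> {}"
        unfolding Bad_def T_def by blast
      thus ?thesis unfolding U_def I_def by blast
    qed
    define h where "h i = (SOME t. t \<in> xx i \<inter> U)" for i
    have hB: "h i \<in> xx i \<inter> U" if "i \<in> Bad" for i
      unfolding h_def using someI_ex[OF Bad_hit[OF that]] .
    have "inj_on h Bad"
    proof (rule inj_onI)
      fix i j assume ij: "i \<in> Bad" "j \<in> Bad" "h i = h j"
      have "i \<in> Phi (P x)" "j \<in> Phi (P x)" using ij PT[OF xK] unfolding Bad_def by blast+
      moreover have "xx i \<inter> xx j \<noteq> {}" using hB[OF ij(1)] hB[OF ij(2)] ij(3) by auto
      ultimately show "i = j" using fibdisj by blast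
    qed
    moreover have "h ` Bad \<subseteq> U" using hB by blast
    ultimately have "|Bad| \<le>o |U|" by (rule le_of_inj)
    hence Badle: "|Bad| \<le>o |thseq x|" using `|U| \<le>o |thseq x|` by (rule ordLeq_transitive)
    show ?thesis
    proof (rule ccontr)
      assume "\<not> |thseq x| <o |T x|"
      hence "|T x| \<le>o |thseq x|" using not_lt_iff by blast
      hence "|T x \<union> Bad| \<le>o |thseq x|" using Un_le_inf[OF inf _ Badle] by blast
      moreover have "T x \<union> Bad = T' x" unfolding Bad_def using TT' by blast
      ultimately have "|T' x| \<le>o |thseq x|" by simp
      thus False using PT[OF xK] not_ordLess_ordLeq by blast
    qed
  qed
  have cross: "xx i \<inter> xx j = {}" if "x \<in> K" "z \<in> K" "x \<noteq> z" "i \<in> T x" "j \<in> T z" for x z i j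
  proof (cases "(z,x) \<in> card_of K")
    case True
    thus ?thesis using that TT' unfolding T_def by blast
  next
    case False
    hence "(x,z) \<in> card_of K" using co_total[OF that(1,2)] by blast
    hence "xx j \<inter> xx i = {}" using that TT' unfolding T_def by blast
    thus ?thesis by blast
  qed
  have same: "xx i \<inter> xx j = {}" if "x \<in> K" "i \<in> T x" "j \<in> T x" "i \<noteq> j" for x i j
    using fibdisj[of i "P x" j] PT[OF that(1)] TT' that by blast
  define y where "y i = (if \<exists>x\<in>K. i \<in> T x then xx i else {})" for i
  have yT: "y i = xx i" if "x \<in> K" "i \<in> T x" for x i using that unfolding y_def by auto
  have TTh: "T x \<subseteq> Th" if "x \<in> K" for x using TT' T'Th[OF that] by blast
  have Y: "disj_fin_family Th y"
    unfolding disj_fin_family_def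
  proof (intro conjI ballI impI)
    fix i assume "i \<in> Th"
    thus "finite (y i)" "y i \<subseteq> Th" unfolding y_def using xxfin xxTh by auto
  next
    fix i j assume ij: "i \<in> Th" "j \<in> Th" "i \<noteq> j"
    show "y i \<inter> y j = {}"
    proof (cases "(\<exists>x\<in>K. i \<in> T x) \<and> (\<exists>x\<in>K. j \<in> T x)")
      case True
      then obtain x z where xz: "x \<in> K" "i \<in> T x" "z \<in> K" "j \<in> T z" by blast
      hence "xx i \<inter> xx j = {}" using cross[of x z i j] same[of x i j] ij(3) by blast
      thus ?thesis using yT xz by simp
    next
      case False thus ?thesis unfolding y_def by auto
    qed
  qed
  have XS: "X_sequence Th K thseq a b y T"
    unfolding X_sequence_def
  proof (intro conjI ballI impI)
    fix x assume "x \<in> K" thus "T x \<subseteq> Th" using TTh by blast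
  next
    fix x z assume xz: "x \<in> K" "z \<in> K" "x \<noteq> z"
    show "T x \<inter> T z = {}"
    proof (rule ccontr)
      assume "T x \<inter> T z \<noteq> {}"
      then obtain i where "i \<in> T x" "i \<in> T z" by blast
      hence "xx i = {}" using cross[OF xz] by blast
      thus False using xxne `i \<in> T x` TTh[OF xz(1)] by blast
    qed
  next
    fix x assume "x \<in> K" thus "|thseq x| <o |T x|" using Tsize by blast
  next
    fix x i j assume "x \<in> K" "i \<in> T x" "j \<in> T x"
    moreover have "pp i = P x" "pp j = P x" using T'pp TT' calculation by blast+
    moreover have "i \<in> Th" "j \<in> Th" using TTh calculation by blast+
    ultimately show "Int_of a (y i) \<inter> Int_of b (y j) = {}"
    proof -
      have "compat R le (pp i) (pp j)" using compat_refl[of "P x"] PT[OF `x \<in> K`] `pp i = P x` `pp j = P x` by simp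
      hence "Int_of a (xx i) \<inter> Int_of b (xx j) = {}" using C[OF `i \<in> Th` `j \<in> Th`] by blast
      thus ?thesis using yT[OF `x \<in> K` `i \<in> T x`] yT[OF `x \<in> K` `j \<in> T x`] by simp
    qed
  qed
  define A where "A = (\<lambda>x. (P x, {x})) ` K"
  have anti: "antichain (R \<times> Q_set K a b y T) (prod_le le Q_le) A"
    unfolding antichain_def
  proof (intro conjI ballI impI)
    show "A \<subseteq> R \<times> Q_set K a b y T"
      unfolding A_def Q_set_def using PT by auto
  next
    fix u v assume uv: "u \<in> A" "v \<in> A" "u \<noteq> v"
    then obtain x z where xz: "x \<in> K" "z \<in> K" "u = (P x, {x})" "v = (P z, {z})" unfolding A_def by blast
    hence "x \<noteq> z" using uv(3) by blast
    show "\<not> compat (R \<times> Q_set K a b y T) (prod_le le Q_le) u v"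
    proof
      assume "compat (R \<times> Q_set K a b y T) (prod_le le Q_le) u v"
      then obtain s G where s: "s \<in> R" "G \<in> Q_set K a b y T" "le s (P x)" "le s (P z)" "x \<in> G" "z \<in> G"
        unfolding compat_def prod_le_def Q_le_def xz by auto
      then obtain i j where ij: "i \<in> T x" "j \<in> T z"
        "Int_of a (y i) \<inter> Int_of b (y j) \<noteq> {} \<or> Int_of b (y i) \<inter> Int_of a (y j) \<noteq> {}"
        using `x \<noteq> z` unfolding Q_set_def by blast
      have ppi: "pp i = P x" "pp j = P z"
        using T'pp[OF xz(1) TT'[THEN subsetD, OF ij(1)]] T'pp[OF xz(2) TT'[THEN subsetD, OF ij(2)]] by auto
      have ijTh: "i \<in> Th" "j \<in> Th" using TTh[OF xz(1)] TTh[OF xz(2)] ij(1,2) by auto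
      have cp: "compat R le (pp i) (pp j)" unfolding compat_def ppi by (rule bexI[of _ s]) (use s(3,4) in simp, rule s(1))
      have A1: "Int_of a (xx i) \<inter> Int_of b (xx j) = {}" using C[OF ijTh cp] by (rule conjunct2)
      have A2: "Int_of a (xx j) \<inter> Int_of b (xx i) = {}"
        using C[OF ijTh(2,1) compat_sym[OF cp]] by (rule conjunct2)
      have A2': "Int_of b (xx i) \<inter> Int_of a (xx j) = {}" using A2 by (simp add: Int_commute)
      have yi: "y i = xx i" using yT[OF xz(1) ij(1)] .
      have yj: "y j = xx j" using yT[OF xz(2) ij(2)] .
      show False using ij(3) A1 A2' unfolding yi yj by simp
    qed
  qed
  have "inj_on (\<lambda>x. (P x, {x})) K" by (rule inj_onI) auto
  hence "|K| \<le>o |A|" unfolding A_def by (rule le_of_inj) blast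
  hence "\<not> |A| <o |K|" using not_ordLess_ordLeq by blast
  hence "\<not> chain_cond (R \<times> Q_set K a b y T) (prod_le le Q_le) K"
    unfolding chain_cond_def using anti by blast
  thus ?thesis using Y XS by blast
qed

end


lemma zorn_pairwise:
  fixes S :: "'x set" and Rl :: "'x \<Rightarrow> 'x \<Rightarrow> bool"
  shows "\<exists>M. M \<subseteq> S \<and> (\<forall>p\<in>M. \<forall>q\<in>M. p \<noteq> q \<longrightarrow> Rl p q) \<and>
     (\<forall>x\<in>S. x \<notin> M \<longrightarrow> \<not> (\<forall>q\<in>M. Rl x q \<and> Rl q x))"
proof -
  define AA where "AA = {M. M \<subseteq> S \<and> (\<forall>p\<in>M. \<forall>q\<in>M. p \<noteq> q \<longrightarrow> Rl p q)}"
  have "\<forall>C\<in>chains AA. \<Union>C \<in> AA"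
  proof
    fix C assume C: "C \<in> chains AA"
    hence CA: "C \<subseteq> AA" and ch: "\<forall>A\<in>C. \<forall>B\<in>C. A \<subseteq> B \<or> B \<subseteq> A"
      unfolding chains_def chain_subset_def by auto
    have "\<Union>C \<subseteq> S" using CA unfolding AA_def by blast
    moreover have "\<forall>p\<in>\<Union>C. \<forall>q\<in>\<Union>C. p \<noteq> q \<longrightarrow> Rl p q"
    proof (intro ballI impI)
      fix p q assume "p \<in> \<Union>C" "q \<in> \<Union>C" "p \<noteq> q"
      then obtain M1 M2 where M: "M1 \<in> C" "M2 \<in> C" "p \<in> M1" "q \<in> M2" by blast
      from ch M(1,2) have "M1 \<subseteq> M2 \<or> M2 \<subseteq> M1" by blast
      thus "Rl p q"
      proof
        assume "M1 \<subseteq> M2"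
        hence "p \<in> M2" using M by blast
        moreover have "M2 \<in> AA" using CA M by blast
        ultimately show ?thesis using M(4) `p \<noteq> q` unfolding AA_def by blast
      next
        assume "M2 \<subseteq> M1"
        hence "q \<in> M1" using M by blast
        moreover have "M1 \<in> AA" using CA M by blast
        ultimately show ?thesis using M(3) `p \<noteq> q` unfolding AA_def by blast
      qed
    qed
    ultimately show "\<Union>C \<in> AA" unfolding AA_def by blast
  qed
  from Zorn_Lemma[OF this] obtain M where M: "M \<in> AA" "\<forall>X\<in>AA. M \<subseteq> X \<longrightarrow> X = M" by blast
  have mx: "\<forall>x\<in>S. x \<notin> M \<longrightarrow> \<not> (\<forall>q\<in>M. Rl x q \<and> Rl q x)"
  proof (intro ballI impI notI)
    fix x assume x: "x \<in> S" "x \<notin> M" "\<forall>q\<in>M. Rl x q \<and> Rl q x"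
    have "insert x M \<in> AA" using M(1) x unfolding AA_def by blast
    hence "insert x M = M" using M(2) by blast
    thus False using x(2) by blast
  qed
  from M(1) have M1: "M \<subseteq> S" and M2: "\<forall>p\<in>M. \<forall>q\<in>M. p \<noteq> q \<longrightarrow> Rl p q"
    unfolding AA_def by auto
  show ?thesis by (rule exI[of _ M], intro conjI, fact M1, fact M2, fact mx)
qed

context L begin

lemma delta_n:
  shows "\<forall>W (F::'k \<Rightarrow> 'v set). W \<subseteq> K \<longrightarrow> \<not> |W| <o |K| \<longrightarrow> (\<forall>v\<in>W. finite (F v) \<and> card (F v) = n) \<longrightarrow>
    (\<exists>W'\<subseteq>W. \<not> |W'| <o |K| \<and> (\<exists>\<rho>. \<forall>v\<in>W'. \<forall>w\<in>W'. v \<noteq> w \<longrightarrow> F v \<inter> F w = \<rho>))"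
proof (induction n)
  case 0
  show ?case
  proof (intro allI impI)
    fix W and F :: "'k \<Rightarrow> 'v set"
    assume "W \<subseteq> K" "\<not> |W| <o |K|" "\<forall>v\<in>W. finite (F v) \<and> card (F v) = 0"
    hence "\<forall>v\<in>W. F v = {}" by auto
    thus "\<exists>W'\<subseteq>W. \<not> |W'| <o |K| \<and> (\<exists>\<rho>. \<forall>v\<in>W'. \<forall>w\<in>W'. v \<noteq> w \<longrightarrow> F v \<inter> F w = \<rho>)"
      using `\<not> |W| <o |K|` by blast
  qed
next
  case (Suc n)
  show ?case
  proof (intro allI impI)
    fix W and F :: "'k \<Rightarrow> 'v set"
    assume W: "W \<subseteq> K" "\<not> |W| <o |K|" "\<forall>v\<in>W. finite (F v) \<and> card (F v) = Suc n"
    show "\<exists>W'\<subseteq>W. \<not> |W'| <o |K| \<and> (\<exists>\<rho>. \<forall>v\<in>W'. \<forall>w\<in>W'. v \<noteq> w \<longrightarrow> F v \<inter> F w = \<rho>)"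
    proof (cases "\<exists>t. \<not> |{v\<in>W. t \<in> F v}| <o |K|")
      case True
      then obtain t where t: "\<not> |{v\<in>W. t \<in> F v}| <o |K|" by blast
      define F' where "F' v = F v - {t}" for v
      have fin: "\<forall>v\<in>{v\<in>W. t \<in> F v}. finite (F' v) \<and> card (F' v) = n"
        unfolding F'_def using W(3) by auto
      have sub: "{v\<in>W. t \<in> F v} \<subseteq> K" using W(1) by blast
      have "\<exists>W'\<subseteq>{v\<in>W. t \<in> F v}. \<not> |W'| <o |K| \<and> (\<exists>\<rho>. \<forall>v\<in>W'. \<forall>w\<in>W'. v \<noteq> w \<longrightarrow> F' v \<inter> F' w = \<rho>)"
      proof -
        have fin': "\<And>v. v \<in> {v\<in>W. t \<in> F v} \<Longrightarrow> finite (F' v) \<and> card (F' v) = n"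
          using fin by blast
        show ?thesis using Suc.IH[rule_format, of "{v\<in>W. t \<in> F v}" F', OF sub t fin'] .
      qed
      then obtain W' \<rho> where W': "W' \<subseteq> {v\<in>W. t \<in> F v}" "\<not> |W'| <o |K|"
        "\<forall>v\<in>W'. \<forall>w\<in>W'. v \<noteq> w \<longrightarrow> F' v \<inter> F' w = \<rho>"
        by blast
      have "\<forall>v\<in>W'. \<forall>w\<in>W'. v \<noteq> w \<longrightarrow> F v \<inter> F w = insert t \<rho>"
      proof (intro ballI impI)
        fix v w assume vw: "v \<in> W'" "w \<in> W'" "v \<noteq> w"
        hence "F' v \<inter> F' w = \<rho>" using W'(3) by blast
        moreover have "t \<in> F v" "t \<in> F w" using vw W'(1) by blast+
        ultimately show "F v \<inter> F w = insert t \<rho>" unfolding F'_def by blast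
      qed
      thus ?thesis using W' by blast
    next
      case False
      hence small: "\<And>t. |{v\<in>W. t \<in> F v}| <o |K|" by blast
      from zorn_pairwise[of W "\<lambda>p q. F p \<inter> F q = {}"] obtain M where M: "M \<subseteq> W" "\<forall>p\<in>M. \<forall>q\<in>M. p \<noteq> q \<longrightarrow> F p \<inter> F q = {}"
        "\<forall>x\<in>W. x \<notin> M \<longrightarrow> \<not> (\<forall>q\<in>M. F x \<inter> F q = {} \<and> F q \<inter> F x = {})"
        by blast
      have "\<not> |M| <o |K|"
      proof
        assume Ms: "|M| <o |K|"
        define U where "U = (\<Union>v\<in>M. F v)"
        have "|U| <o |K|" unfolding U_def
        proof (rule K_union[OF Ms])
          fix v assume "v \<in> M"
          hence "finite (F v)" using W(3) M(1) by blast
          thus "|F v| <o |K|" using finite_lt_infinite K_inf by blast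
        qed
        define B where "B = (\<Union>t\<in>U. {v\<in>W. t \<in> F v})"
        have Bs: "|B| <o |K|" unfolding B_def using K_union[of U "\<lambda>t. {v\<in>W. t \<in> F v}"] `|U| <o |K|` small by blast
        have "\<not> W \<subseteq> B"
        proof
          assume "W \<subseteq> B"
          hence "|W| \<le>o |B|" by (rule card_of_mono1)
          thus False using ordLeq_ordLess_trans[OF _ Bs] W(2) by blast
        qed
        then obtain v where v: "v \<in> W" "v \<notin> B" by blast
        have disj: "F v \<inter> U = {}" using v unfolding B_def by blast
        have "card (F v) = Suc n" using W(3) v(1) by blast
        hence "F v \<noteq> {}" by auto
        hence "v \<notin> M" using disj unfolding U_def by blast
        moreover have "\<forall>q\<in>M. F v \<inter> F q = {} \<and> F q \<inter> F v = {}"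
          using disj unfolding U_def by blast
        ultimately show False using M(3) v(1) by blast
      qed
      thus ?thesis using M(1,2) by blast
    qed
  qed
qed

lemma delta:
  fixes F :: "'k \<Rightarrow> 'v set"
  assumes "W \<subseteq> K" "\<not> |W| <o |K|" "\<forall>v\<in>W. finite (F v)"
  shows "\<exists>W'\<subseteq>W. \<not> |W'| <o |K| \<and> (\<exists>\<rho>. \<forall>v\<in>W'. \<forall>w\<in>W'. v \<noteq> w \<longrightarrow> F v \<inter> F w = \<rho>)"
proof -
  have "\<exists>n. \<not> |{v\<in>W. card (F v) = n}| <o |K|"
  proof (rule ccontr)
    assume "\<not> (\<exists>n. \<not> |{v\<in>W. card (F v) = n}| <o |K| )"
    hence "\<And>n. |{v\<in>W. card (F v) = n}| <o |K|" by blast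
    hence "|\<Union>n\<in>(UNIV::nat set). {v\<in>W. card (F v) = n}| <o |K|"
      using K_union[of "UNIV::nat set" "\<lambda>n. {v\<in>W. card (F v) = n}"] uncountable_cf by blast
    moreover have "(\<Union>n\<in>(UNIV::nat set). {v\<in>W. card (F v) = n}) = W" by blast
    ultimately show False using assms(2) by simp
  qed
  then obtain n where n: "\<not> |{v\<in>W. card (F v) = n}| <o |K|" by blast
  have "\<exists>W'\<subseteq>{v\<in>W. card (F v) = n}. \<not> |W'| <o |K| \<and> (\<exists>\<rho>. \<forall>v\<in>W'. \<forall>w\<in>W'. v \<noteq> w \<longrightarrow> F v \<inter> F w = \<rho>)"
  proof -
    have h: "{v\<in>W. card (F v) = n} \<subseteq> K" using assms(1) by blast
    have h2: "\<And>v. v \<in> {v\<in>W. card (F v) = n} \<Longrightarrow> finite (F v) \<and> card (F v) = n" using assms(3) by blast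
    show ?thesis using delta_n[rule_format, of "{v\<in>W. card (F v) = n}" F, OF h n h2] .
  qed
  then obtain W' \<rho> where W': "W' \<subseteq> {v\<in>W. card (F v) = n}" "\<not> |W'| <o |K|"
    "\<forall>v\<in>W'. \<forall>w\<in>W'. v \<noteq> w \<longrightarrow> F v \<inter> F w = \<rho>" by blast
  have "W' \<subseteq> W" using W'(1) by blast
  thus ?thesis using W'(2,3) by blast
qed

end


context L begin

lemma bwd:
  assumes Y: "disj_fin_family Th y" and XS: "X_sequence Th K thseq a b y T"
    and NC: "\<not> chain_cond (R \<times> Q_set K a b y T) (prod_le le Q_le) K"
  shows "dangerous R le Th a b"
proof -
  define QQ where "QQ = Q_set K a b y T"
  have yfin: "\<And>i. i \<in> Th \<Longrightarrow> finite (y i) \<and> y i \<subseteq> Th"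
    and ydisj: "\<And>i j. i \<in> Th \<Longrightarrow> j \<in> Th \<Longrightarrow> i \<noteq> j \<Longrightarrow> y i \<inter> y j = {}"
    using Y unfolding disj_fin_family_def by blast+
  have TTh: "\<And>x. x \<in> K \<Longrightarrow> T x \<subseteq> Th"
    and Tdisj: "\<And>x z. x \<in> K \<Longrightarrow> z \<in> K \<Longrightarrow> x \<noteq> z \<Longrightarrow> T x \<inter> T z = {}"
    and Tbig: "\<And>x. x \<in> K \<Longrightarrow> |thseq x| <o |T x|"
    and Torth: "\<And>x i j. x \<in> K \<Longrightarrow> i \<in> T x \<Longrightarrow> j \<in> T x \<Longrightarrow> Int_of a (y i) \<inter> Int_of b (y j) = {}"
    using XS unfolding X_sequence_def by blast+
  from NC obtain A where anti: "antichain (R \<times> QQ) (prod_le le Q_le) A" and Abig: "\<not> |A| <o |K|"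
    unfolding chain_cond_def QQ_def by blast
  have "|K| \<le>o |A|" using Abig not_lt_iff by blast
  then obtain g where g: "inj_on g K" "g ` K \<subseteq> A" using inj_of_le by blast
  have AS: "A \<subseteq> R \<times> QQ" and Ainc: "\<forall>p\<in>A. \<forall>q\<in>A. p \<noteq> q \<longrightarrow> \<not> compat (R \<times> QQ) (prod_le le Q_le) p q"
    using anti unfolding antichain_def by blast+
  define rr where "rr v = fst (g v)" for v
  define FF where "FF v = snd (g v)" for v
  have grr: "g v = (rr v, FF v)" for v unfolding rr_def FF_def by simp
  have gin: "g v \<in> R \<times> QQ" if "v \<in> K" for v using g(2) AS that by blast
  have rrR: "rr v \<in> R" if "v \<in> K" for v using gin[OF that] unfolding grr by simp
  have FFQ: "FF v \<in> QQ" if "v \<in> K" for v using gin[OF that] unfolding grr by simp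
  have FFfin: "finite (FF v) \<and> FF v \<subseteq> K" if "v \<in> K" for v using FFQ[OF that] unfolding QQ_def Q_set_def by blast
  have QQw: "\<exists>i\<in>T x. \<exists>j\<in>T z. Int_of a (y i) \<inter> Int_of b (y j) \<noteq> {} \<or> Int_of b (y i) \<inter> Int_of a (y j) \<noteq> {}"
    if "F \<in> QQ" "x \<in> F" "z \<in> F" "x \<noteq> z" for F x z
    using that unfolding QQ_def Q_set_def by blast
  define orth where "orth x z \<longleftrightarrow> (\<forall>i\<in>T x. \<forall>j\<in>T z. Int_of a (y i) \<inter> Int_of b (y j) = {} \<and> Int_of b (y i) \<inter> Int_of a (y j) = {})" for x z
  have orth_sym: "orth z x" if "orth x z" for x z
  proof -
    have "\<forall>i\<in>T z. \<forall>j\<in>T x. Int_of a (y i) \<inter> Int_of b (y j) = {} \<and> Int_of b (y i) \<inter> Int_of a (y j) = {}"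
    proof (intro ballI)
      fix i j assume "i \<in> T z" "j \<in> T x"
      hence "Int_of a (y j) \<inter> Int_of b (y i) = {} \<and> Int_of b (y j) \<inter> Int_of a (y i) = {}"
        using that unfolding orth_def by blast
      thus "Int_of a (y i) \<inter> Int_of b (y j) = {} \<and> Int_of b (y i) \<inter> Int_of a (y j) = {}"
        by (simp add: Int_commute)
    qed
    thus ?thesis unfolding orth_def .
  qed
  have wit: "\<exists>x\<in>FF v. \<exists>z\<in>FF w. x \<notin> FF w \<and> z \<notin> FF v \<and> orth x z"
    if vw: "v \<in> K" "w \<in> K" "v \<noteq> w" "compat R le (rr v) (rr w)" for v w
  proof -
    from vw(4) obtain s where s: "s \<in> R" "le s (rr v)" "le s (rr w)" unfolding compat_def by blast
    have "g v \<noteq> g w" using inj_onD[OF g(1) _ vw(1) vw(2)] vw(3) by blast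
    hence nc: "\<not> compat (R \<times> QQ) (prod_le le Q_le) (g v) (g w)"
      using Ainc g(2) vw(1,2) by blast
    have notQ: "FF v \<union> FF w \<notin> QQ"
    proof
      assume U: "FF v \<union> FF w \<in> QQ"
      have "(s, FF v \<union> FF w) \<in> R \<times> QQ" using s(1) U by blast
      moreover have "prod_le le Q_le (s, FF v \<union> FF w) (g v)" "prod_le le Q_le (s, FF v \<union> FF w) (g w)"
        unfolding prod_le_def Q_le_def grr using s by auto
      ultimately have "compat (R \<times> QQ) (prod_le le Q_le) (g v) (g w)" unfolding compat_def by blast
      thus False using nc by blast
    qed
    have "finite (FF v \<union> FF w)" "FF v \<union> FF w \<subseteq> K" using FFfin[OF vw(1)] FFfin[OF vw(2)] by auto
    with notQ obtain x z where xz: "x \<in> FF v \<union> FF w" "z \<in> FF v \<union> FF w" "x \<noteq> z"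
       "\<not> (\<exists>i\<in>T x. \<exists>j\<in>T z. Int_of a (y i) \<inter> Int_of b (y j) \<noteq> {} \<or> Int_of b (y i) \<inter> Int_of a (y j) \<noteq> {})"
      unfolding QQ_def Q_set_def by blast
    have o: "orth x z" using xz(4) unfolding orth_def by blast
    have nv: "\<not> (x \<in> FF v \<and> z \<in> FF v)" using QQw[OF FFQ[OF vw(1)], of x z] xz(3,4) by blast
    have nw: "\<not> (x \<in> FF w \<and> z \<in> FF w)" using QQw[OF FFQ[OF vw(2)], of x z] xz(3,4) by blast
    show ?thesis
    proof (cases "x \<in> FF v")
      case True
      hence z1: "z \<in> FF w" "z \<notin> FF v" using nv xz(2) by blast+
      have x1: "x \<notin> FF w" using nw z1(1) by blast
      have "x \<notin> FF w \<and> z \<notin> FF v \<and> orth x z" using x1 z1 o by blast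
      thus ?thesis by (rule bexI[OF bexI[OF _ z1(1)] True])
    next
      case False
      hence x1: "x \<in> FF w" using xz(1) by blast
      hence z1: "z \<in> FF v" "z \<notin> FF w" using nw xz(2) by blast+
      have "z \<notin> FF w \<and> x \<notin> FF v \<and> orth z x" using z1 False orth_sym[OF o] by blast
      thus ?thesis by (rule bexI[OF bexI[OF _ x1] z1(1)])
    qed
  qed
  have "\<not> |K| <o |K|" using ordLess_irreflexive by blast
  moreover have "\<forall>v\<in>K. finite (FF v)" using FFfin by blast
  ultimately have "\<exists>W'\<subseteq>K. \<not> |W'| <o |K| \<and> (\<exists>\<rho>. \<forall>v\<in>W'. \<forall>w\<in>W'. v \<noteq> w \<longrightarrow> FF v \<inter> FF w = \<rho>)"
    using delta[of K FF] by blast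
  then obtain K1 where K1: "K1 \<subseteq> K" "\<not> |K1| <o |K|" "\<exists>\<rho>. \<forall>v\<in>K1. \<forall>w\<in>K1. v \<noteq> w \<longrightarrow> FF v \<inter> FF w = \<rho>"
    by blast
  then obtain \<rho> where rho: "\<forall>v\<in>K1. \<forall>w\<in>K1. v \<noteq> w \<longrightarrow> FF v \<inter> FF w = \<rho>" by blast
  have K1inf: "infinite K1" using K1(2) finite_lt_infinite K_inf by blast
  have rhosub: "\<rho> \<subseteq> FF v" if "v \<in> K1" for v
  proof -
    have "K1 - {v} \<noteq> {}" using K1inf by (metis finite.emptyI finite_insert insert_Diff_single insert_absorb2 Diff_empty)
    then obtain w where "w \<in> K1" "w \<noteq> v" by blast
    thus ?thesis using rho that by blast
  qed
  define Z0 where "Z0 = {v\<in>K1. FF v = \<rho>}"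
  have Z0inc: "\<not> compat R le (rr v) (rr w)" if vw: "v \<in> Z0" "w \<in> Z0" "v \<noteq> w" for v w
  proof
    assume c: "compat R le (rr v) (rr w)"
    have vK: "v \<in> K" "w \<in> K" using vw K1(1) unfolding Z0_def by blast+
    obtain x where "x \<in> FF v" "x \<notin> FF w" using wit[OF vK vw(3) c] by blast
    thus False using vw unfolding Z0_def by blast
  qed
  have rrinj: "inj_on rr Z0"
  proof (rule inj_onI)
    fix v w assume vw: "v \<in> Z0" "w \<in> Z0" "rr v = rr w"
    show "v = w"
    proof (rule ccontr)
      assume "v \<noteq> w"
      have "v \<in> K" using vw K1(1) unfolding Z0_def by blast
      hence "compat R le (rr v) (rr w)" using compat_refl[OF rrR] vw(3) by metis
      thus False using Z0inc[OF vw(1,2) `v \<noteq> w`] by blast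
    qed
  qed
  have "antichain R le (rr ` Z0)"
    unfolding antichain_def
  proof (intro conjI ballI impI)
    show "rr ` Z0 \<subseteq> R" using rrR K1(1) unfolding Z0_def by blast
  next
    fix p q assume pq: "p \<in> rr ` Z0" "q \<in> rr ` Z0" "p \<noteq> q"
    then obtain v w where "v \<in> Z0" "w \<in> Z0" "p = rr v" "q = rr w" by blast
    thus "\<not> compat R le p q" using Z0inc pq(3) by blast
  qed
  hence "|rr ` Z0| <o |K|" using R_cc unfolding chain_cond_def by blast
  hence Z0s: "|Z0| <o |K|" using ordIso_ordLess_trans[OF ordIso_symmetric[OF le_inj_image[OF rrinj]]] by blast
  define K2 where "K2 = K1 - Z0"
  have K2big: "\<not> |K2| <o |K|"
  proof
    assume "|K2| <o |K|"
    hence "|K2 \<union> Z0| <o |K|" using card_of_Un_ordLess_infinite[OF K_inf _ Z0s] by blast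
    moreover have "K1 \<subseteq> K2 \<union> Z0" unfolding K2_def by blast
    ultimately have "|K1| <o |K|" using ordLeq_ordLess_trans[OF card_of_mono1] by blast
    thus False using K1(2) by blast
  qed
  have K2K: "K2 \<subseteq> K" using K1(1) unfolding K2_def by blast
  define E where "E v = FF v - \<rho>" for v
  have Ene: "E v \<noteq> {}" if "v \<in> K2" for v
    using that rhosub unfolding K2_def Z0_def E_def by blast
  have Edisj: "E v \<inter> E w = {}" if "v \<in> K2" "w \<in> K2" "v \<noteq> w" for v w
    using rho that unfolding K2_def E_def by blast
  have EK: "E v \<subseteq> K \<and> finite (E v)" if "v \<in> K2" for v
    using FFfin[of v] that K2K unfolding E_def by blast
  have witE: "\<exists>x\<in>E v. \<exists>z\<in>E w. orth x z"
    if vw: "v \<in> K2" "w \<in> K2" "v \<noteq> w" "compat R le (rr v) (rr w)" for v w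
  proof -
    obtain x z where xz: "x \<in> FF v" "z \<in> FF w" "x \<notin> FF w" "z \<notin> FF v" "orth x z"
      using wit[OF _ _ vw(3,4)] vw(1,2) K2K by blast
    have "x \<in> E v" "z \<in> E w" using xz rhosub vw(1,2) unfolding E_def K2_def by blast+
    thus ?thesis using xz(5) by blast
  qed
  obtain X where X: "X \<subseteq> Th" "cofinal X |Th|" "|X| =o |K|"
    using kappa_cf unfolding is_cofinality_def by blast
  obtain e where e: "bij_betw e K X"
    using X(3) ordIso_symmetric card_of_ordIso by blast
  have levex: "\<exists>d. d \<in> K \<and> (i, e d) \<in> card_of Th" if "i \<in> Th" for i
  proof -
    have cf: "\<forall>a\<in>Field |Th|. \<exists>b\<in>X. a \<noteq> b \<and> (a,b) \<in> card_of Th" using X(2) unfolding cofinal_def .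
    have "\<exists>b\<in>X. i \<noteq> b \<and> (i,b) \<in> card_of Th" using bspec[OF cf, of i] that by (simp add: Field_card_of)
    then obtain x where x: "x \<in> X" "i \<noteq> x" "(i,x) \<in> card_of Th" by blast
    have "x \<in> e ` K" using x(1) e unfolding bij_betw_def by simp
    then obtain d where d: "d \<in> K" "e d = x" by (rule imageE) simp
    show ?thesis using d x(3) by (intro exI[of _ d]) simp
  qed
  hence "\<forall>i\<in>Th. \<exists>d. d \<in> K \<and> (i, e d) \<in> card_of Th" by blast
  from bchoice[OF this] obtain lev where lev: "\<forall>i\<in>Th. lev i \<in> K \<and> (i, e (lev i)) \<in> card_of Th" ..
  define Lv where "Lv d = {i\<in>Th. (lev i, d) \<in> card_of K}" for d
  have Lv_small: "|Lv d| <o |Th|" if dK: "d \<in> K" for d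
  proof -
    define D where "D = {d'. (d',d) \<in> card_of K}"
    have Ds: "|D| <o |K|" unfolding D_def using under_small[OF K_inf dK] .
    have DK: "D \<subseteq> K" unfolding D_def using co_field[of _ d K] by blast
    have eD: "e ` D \<subseteq> Th" using DK e X(1) unfolding bij_betw_def by blast
    have "|e ` D| <o |K|" using ordLeq_ordLess_trans[OF card_of_image Ds] .
    then obtain u where u: "u \<in> Th" "\<forall>t\<in>e ` D. (t,u) \<in> card_of Th" using Th_bounded[OF eD] by blast
    have "Lv d \<subseteq> {i. (i,u) \<in> card_of Th}"
    proof
      fix i assume i: "i \<in> Lv d"
      hence iT: "i \<in> Th" and "lev i \<in> D" unfolding Lv_def D_def by blast+
      hence "(e (lev i), u) \<in> card_of Th" using u by blast
      moreover have "(i, e (lev i)) \<in> card_of Th" using lev iT by blast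
      ultimately show "i \<in> {i. (i,u) \<in> card_of Th}" using co_trans[of i "e (lev i)" Th u] by blast
    qed
    hence "|Lv d| \<le>o |{i. (i,u) \<in> card_of Th}|" by (rule card_of_mono1)
    moreover have "|{i. (i,u) \<in> card_of Th}| <o |Th|" using under_small[OF theta_inf u(1)] .
    ultimately show ?thesis by (rule ordLeq_ordLess_trans)
  qed
  have "\<forall>d\<in>K. \<exists>h. h \<in> K \<and> |Lv d| \<le>o |thseq h|"
  proof
    fix d assume "d \<in> K"
    have "Lv d \<subseteq> Th" unfolding Lv_def by blast
    thus "\<exists>h. h \<in> K \<and> |Lv d| \<le>o |thseq h|" using thseq_conv Lv_small[OF `d \<in> K`] by blast
  qed
  from bchoice[OF this] obtain phi where phi: "\<forall>d\<in>K. phi d \<in> K \<and> |Lv d| \<le>o |thseq (phi d)|" ..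
  define Cs where "Cs v = {d\<in>K. \<forall>x\<in>E v. |Lv d| \<le>o |thseq x|}" for v
  define L where "L v = {i\<in>Th. lev i \<in> Cs v}" for v
  have Lsize: "|L v| \<le>o |thseq x|" if vx: "v \<in> K2" "x \<in> E v" for v x
  proof -
    have xK: "x \<in> K" using EK[OF vx(1)] vx(2) by blast
    have inf: "infinite (thseq x)" using thseq_inf[OF xK] .
    have sub: "L v \<subseteq> (\<Union>d\<in>Cs v. Lv d)"
    proof
      fix i assume "i \<in> L v"
      hence i: "i \<in> Th" "lev i \<in> Cs v" unfolding L_def by blast+
      have "lev i \<in> K" using lev i(1) by blast
      hence "i \<in> Lv (lev i)" unfolding Lv_def using i(1) co_refl[of "lev i" K] by blast
      thus "i \<in> (\<Union>d\<in>Cs v. Lv d)" using i(2) by blast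
    qed
    have "|\<Union>d\<in>Cs v. Lv d| \<le>o |thseq x|"
    proof (rule UN_le_inf[OF inf])
      have "|Cs v| \<le>o |K|" unfolding Cs_def by (rule card_of_mono1) blast
      thus "|Cs v| \<le>o |thseq x|" using K_le_thseq[OF xK] by (rule ordLeq_transitive)
    next
      fix d assume "d \<in> Cs v"
      thus "|Lv d| \<le>o |thseq x|" unfolding Cs_def using vx(2) by blast
    qed
    thus ?thesis using ordLeq_transitive[OF card_of_mono1[OF sub]] by blast
  qed
  have "\<forall>p\<in>Sigma K2 E. \<exists>f. inj_on f (L (fst p)) \<and> f ` L (fst p) \<subseteq> T (snd p)"
  proof
    fix p assume p: "p \<in> Sigma K2 E"
    hence v: "fst p \<in> K2" "snd p \<in> E (fst p)" by auto
    have xK: "snd p \<in> K" using EK[OF v(1)] v(2) by blast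
    have "|L (fst p)| \<le>o |T (snd p)|"
      using ordLess_imp_ordLeq[OF ordLeq_ordLess_trans[OF Lsize[OF v] Tbig[OF xK]]] .
    thus "\<exists>f. inj_on f (L (fst p)) \<and> f ` L (fst p) \<subseteq> T (snd p)" by (rule inj_of_le)
  qed
  from bchoice[OF this] obtain fc' where fc': "\<forall>p\<in>Sigma K2 E. inj_on (fc' p) (L (fst p)) \<and> fc' p ` L (fst p) \<subseteq> T (snd p)" ..
  define fc where "fc v x = fc' (v, x)" for v x
  have fc: "inj_on (fc v x) (L v) \<and> fc v x ` L v \<subseteq> T x" if "v \<in> K2" "x \<in> E v" for v x
    using bspec[OF fc', of "(v,x)"] that unfolding fc_def by simp
  define z where "z v i = (\<Union>x\<in>E v. y (fc v x i))" for v i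
  have zfin: "finite (z v i) \<and> z v i \<subseteq> Th" if "v \<in> K2" "i \<in> L v" for v i
  proof -
    have "\<forall>x\<in>E v. finite (y (fc v x i)) \<and> y (fc v x i) \<subseteq> Th"
    proof
      fix x assume x: "x \<in> E v"
      have "fc v x i \<in> T x" using fc[OF that(1) x] that(2) by blast
      moreover have "x \<in> K" using EK[OF that(1)] x by blast
      ultimately have "fc v x i \<in> Th" using TTh by blast
      thus "finite (y (fc v x i)) \<and> y (fc v x i) \<subseteq> Th" using yfin by blast
    qed
    thus ?thesis unfolding z_def using EK[OF that(1)] by blast
  qed
  have zsup: "y (fc v x i) \<subseteq> z v i" if "x \<in> E v" for v x i
    unfolding z_def using that by blast
  have star: "\<exists>r\<in>R. \<forall>q\<in>R. le q r \<longrightarrow> (\<forall>\<gamma>\<in>K. \<exists>v\<in>K2. (\<forall>x\<in>E v. (\<gamma>,x) \<in> card_of K) \<and> compat R le q (rr v))"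
  proof (rule ccontr)
    assume H: "\<not> (\<exists>r\<in>R. \<forall>q\<in>R. le q r \<longrightarrow> (\<forall>\<gamma>\<in>K. \<exists>v\<in>K2. (\<forall>x\<in>E v. (\<gamma>,x) \<in> card_of K) \<and> compat R le q (rr v)))"
    define D where "D = {q\<in>R. \<exists>\<gamma>\<in>K. \<forall>v\<in>K2. (\<forall>x\<in>E v. (\<gamma>,x) \<in> card_of K) \<longrightarrow> \<not> compat R le q (rr v)}"
    have dense: "\<exists>q\<in>D. le q r" if "r \<in> R" for r
    proof -
      have "\<not> (\<forall>q\<in>R. le q r \<longrightarrow> (\<forall>\<gamma>\<in>K. \<exists>v\<in>K2. (\<forall>x\<in>E v. (\<gamma>,x) \<in> card_of K) \<and> compat R le q (rr v)))"
        using H that by blast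
      then obtain q \<gamma> where q: "q \<in> R" "le q r" "\<gamma> \<in> K"
        "\<forall>v\<in>K2. (\<forall>x\<in>E v. (\<gamma>,x) \<in> card_of K) \<longrightarrow> \<not> compat R le q (rr v)" by blast
      have "q \<in> D" unfolding D_def using q by blast
      thus ?thesis using q(2) by blast
    qed
    from zorn_pairwise[of D "\<lambda>p q. \<not> compat R le p q"] obtain M where M: "M \<subseteq> D"
      "\<forall>p\<in>M. \<forall>q\<in>M. p \<noteq> q \<longrightarrow> \<not> compat R le p q"
      "\<forall>x\<in>D. x \<notin> M \<longrightarrow> \<not> (\<forall>q\<in>M. \<not> compat R le x q \<and> \<not> compat R le q x)" by blast
    have MR: "M \<subseteq> R" using M(1) unfolding D_def by blast
    have "antichain R le M" unfolding antichain_def using MR M(2) by blast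
    hence Ms: "|M| <o |K|" using R_cc unfolding chain_cond_def by blast
    have "\<forall>q\<in>M. \<exists>\<gamma>. \<gamma> \<in> K \<and> (\<forall>v\<in>K2. (\<forall>x\<in>E v. (\<gamma>,x) \<in> card_of K) \<longrightarrow> \<not> compat R le q (rr v))"
      using M(1) unfolding D_def by blast
    from bchoice[OF this] obtain gam where gam:
      "\<forall>q\<in>M. gam q \<in> K \<and> (\<forall>v\<in>K2. (\<forall>x\<in>E v. (gam q,x) \<in> card_of K) \<longrightarrow> \<not> compat R le q (rr v))" ..
    have gK: "gam ` M \<subseteq> K" using gam by blast
    have "|gam ` M| <o |K|" using ordLeq_ordLess_trans[OF card_of_image Ms] .
    then obtain gs where gs: "gs \<in> K" "\<forall>t\<in>gam ` M. (t,gs) \<in> card_of K" using K_bounded[OF gK] by blast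
    define Bad where "Bad = {v\<in>K2. \<exists>x\<in>E v. (gs,x) \<notin> card_of K}"
    have "\<forall>v\<in>Bad. \<exists>x. x \<in> E v \<and> (gs,x) \<notin> card_of K" unfolding Bad_def by blast
    from bchoice[OF this] obtain al where al: "\<forall>v\<in>Bad. al v \<in> E v \<and> (gs, al v) \<notin> card_of K" ..
    have "inj_on al Bad"
    proof (rule inj_onI)
      fix v w assume vw: "v \<in> Bad" "w \<in> Bad" "al v = al w"
      show "v = w"
      proof (rule ccontr)
        assume "v \<noteq> w"
        have "v \<in> K2" "w \<in> K2" using vw unfolding Bad_def by blast+
        hence "E v \<inter> E w = {}" using Edisj `v \<noteq> w` by blast
        moreover have "al v \<in> E v" "al w \<in> E w" using al vw by blast+
        moreover have "al v \<in> E w" using `al w \<in> E w` vw(3) by simp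
        ultimately show False by blast
      qed
    qed
    moreover have "al ` Bad \<subseteq> {d. (d,gs) \<in> card_of K}"
    proof
      fix t assume "t \<in> al ` Bad"
      then obtain v where v: "v \<in> Bad" "t = al v" by blast
      have "v \<in> K2" using v unfolding Bad_def by blast
      hence "t \<in> K" using al v EK[of v] by blast
      moreover have "(gs, t) \<notin> card_of K" using al v by blast
      ultimately have "(t, gs) \<in> card_of K" using co_total[of t K gs] gs(1) by blast
      thus "t \<in> {d. (d,gs) \<in> card_of K}" by blast
    qed
    ultimately have "|Bad| \<le>o |{d. (d,gs) \<in> card_of K}|" by (rule le_of_inj)
    hence Bads: "|Bad| <o |K|" using under_small[OF K_inf gs(1)] by (rule ordLeq_ordLess_trans)
    have "\<not> K2 \<subseteq> Bad"
    proof
      assume "K2 \<subseteq> Bad"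
      hence "|K2| \<le>o |Bad|" by (rule card_of_mono1)
      hence "|K2| <o |K|" using Bads by (rule ordLeq_ordLess_trans)
      thus False using K2big by blast
    qed
    then obtain v where v: "v \<in> K2" "v \<notin> Bad" by blast
    have hv: "\<forall>x\<in>E v. (gs,x) \<in> card_of K" using v unfolding Bad_def by blast
    have rvR: "rr v \<in> R" using rrR v(1) K2K by blast
    obtain q where q: "q \<in> D" "le q (rr v)" using dense[OF rvR] by blast
    have qR: "q \<in> R" using q(1) unfolding D_def by blast
    have "\<exists>m\<in>M. compat R le q m"
    proof (cases "q \<in> M")
      case True thus ?thesis using compat_refl[OF qR] by blast
    next
      case False
      hence "\<not> (\<forall>m\<in>M. \<not> compat R le q m \<and> \<not> compat R le m q)" using M(3) q(1) by blast
      then obtain m where "m \<in> M" "compat R le q m \<or> compat R le m q" by blast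
      thus ?thesis using compat_sym by blast
    qed
    then obtain m where m: "m \<in> M" "compat R le q m" by blast
    then obtain s where s: "s \<in> R" "le s q" "le s m" unfolding compat_def by blast
    have "le s (rr v)" using le_trans'[OF s(1) qR rvR s(2) q(2)] .
    hence cm: "compat R le m (rr v)" unfolding compat_def using s by blast
    have mg: "gam m \<in> K" "(gam m, gs) \<in> card_of K" using gam gs m(1) by blast+
    have "\<forall>x\<in>E v. (gam m, x) \<in> card_of K"
      using hv co_trans[of "gam m" gs K] mg(2) by blast
    hence "\<not> compat R le m (rr v)" using gam m(1) v(1) by blast
    thus False using cm by blast
  qed
  then obtain r where r: "r \<in> R"
    "\<forall>q\<in>R. le q r \<longrightarrow> (\<forall>\<gamma>\<in>K. \<exists>v\<in>K2. (\<forall>x\<in>E v. (\<gamma>,x) \<in> card_of K) \<and> compat R le q (rr v))" by blast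
  define N where "N i = {(p, z v i) | p v. v \<in> K2 \<and> p \<in> R \<and> le p r \<and> le p (rr v) \<and> i \<in> L v \<and>
     (\<forall>w\<in>K2. (w,v) \<in> card_of K \<and> w \<noteq> v \<and> i \<in> L w \<longrightarrow> \<not> compat R le p (rr w))}" for i
  have memN: "\<exists>v. x = z v i \<and> v \<in> K2 \<and> p \<in> R \<and> le p r \<and> le p (rr v) \<and> i \<in> L v \<and>
     (\<forall>w\<in>K2. (w,v) \<in> card_of K \<and> w \<noteq> v \<and> i \<in> L w \<longrightarrow> \<not> compat R le p (rr w))"
    if "(p,x) \<in> N i" for p x i
    using that unfolding N_def by blast
  have P1: "p \<in> R \<and> le p r \<and> finite x \<and> x \<subseteq> Th" if pxN: "(p,x) \<in> N i" for i p x
  proof -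
    obtain v where v: "x = z v i" "v \<in> K2" "p \<in> R" "le p r" "i \<in> L v" using memN[OF pxN] by blast
    show ?thesis using zfin[OF v(2) v(5)] v by blast
  qed
  have P2: "\<exists>px\<in>N i. compat R le q (fst px)" if i: "i \<in> Th" and q: "q \<in> R" "le q r" for i q
  proof -
    have li: "lev i \<in> K" using lev i by blast
    define \<gamma> where "\<gamma> = phi (lev i)"
    have g: "\<gamma> \<in> K" "|Lv (lev i)| \<le>o |thseq \<gamma>|" using phi li unfolding \<gamma>_def by blast+
    obtain v where v: "v \<in> K2" "\<forall>x\<in>E v. (\<gamma>,x) \<in> card_of K" "compat R le q (rr v)"
      using r(2) q g(1) by blast
    have "lev i \<in> Cs v" unfolding Cs_def
    proof (intro CollectI conjI ballI)
      show "lev i \<in> K" using li .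
    next
      fix x assume x: "x \<in> E v"
      have xK: "x \<in> K" using EK[OF v(1)] x by blast
      have "|thseq \<gamma>| \<le>o |thseq x|" using thseq_mono[OF g(1) xK] v(2) x by blast
      thus "|Lv (lev i)| \<le>o |thseq x|" using g(2) by (rule ordLeq_transitive[rotated])
    qed
    hence iv: "i \<in> L v" unfolding L_def using i by blast
    define Dq where "Dq = {w\<in>K2. i \<in> L w \<and> compat R le q (rr w)}"
    have vD: "v \<in> Dq" unfolding Dq_def using v(1,3) iv by blast
    have DqK: "Dq \<subseteq> K" unfolding Dq_def using K2K by blast
    define v0 where "v0 = wo_rel.minim (card_of K) Dq"
    have v0: "v0 \<in> Dq" "\<forall>c\<in>Dq. (v0, c) \<in> card_of K"
      using co_minim[OF DqK vD] unfolding v0_def by blast+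
    have v0': "v0 \<in> K2" "i \<in> L v0" "compat R le q (rr v0)" using v0(1) unfolding Dq_def by blast+
    have v0K: "v0 \<in> K" using v0'(1) K2K by blast
    obtain s where s: "s \<in> R" "le s q" "le s (rr v0)" using v0'(3) unfolding compat_def by blast
    have sr: "le s r" using le_trans'[OF s(1) q(1) r(1) s(2) q(2)] .
    have nc: "\<forall>w\<in>K2. (w,v0) \<in> card_of K \<and> w \<noteq> v0 \<and> i \<in> L w \<longrightarrow> \<not> compat R le s (rr w)"
    proof (intro ballI impI notI)
      fix w assume w: "w \<in> K2" "(w,v0) \<in> card_of K \<and> w \<noteq> v0 \<and> i \<in> L w" and c: "compat R le s (rr w)"
      obtain t where t: "t \<in> R" "le t s" "le t (rr w)" using c unfolding compat_def by blast
      have "le t q" using le_trans'[OF t(1) s(1) q(1) t(2) s(2)] .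
      hence "compat R le q (rr w)" unfolding compat_def using t by blast
      hence "w \<in> Dq" unfolding Dq_def using w by blast
      hence "(v0, w) \<in> card_of K" using v0(2) by blast
      hence "w = v0" using co_antisym[of w v0 K] w(2) by blast
      thus False using w(2) by blast
    qed
    have "(s, z v0 i) \<in> N i" unfolding N_def using v0' s sr nc by blast
    moreover have "compat R le q s" unfolding compat_def using s le_refl'[OF s(1)] by blast
    ultimately show ?thesis by (intro bexI[of _ "(s, z v0 i)"]) simp_all
  qed
  have P3: "(i = j \<longrightarrow> x = w) \<and> (i \<noteq> j \<longrightarrow> x \<inter> w = {}) \<and> Int_of a x \<inter> Int_of b w = {}"
    if ij: "i \<in> Th" "j \<in> Th" and px: "(p,x) \<in> N i" and qw: "(q,w) \<in> N j" and pq: "compat R le p q"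
    for i j p x q w
  proof -
    obtain v where v: "x = z v i" "v \<in> K2" "p \<in> R" "le p r" "le p (rr v)" "i \<in> L v"
      "\<forall>w'\<in>K2. (w',v) \<in> card_of K \<and> w' \<noteq> v \<and> i \<in> L w' \<longrightarrow> \<not> compat R le p (rr w')"
      using memN[OF px] by blast
    obtain u where u: "w = z u j" "u \<in> K2" "q \<in> R" "le q r" "le q (rr u)" "j \<in> L u"
      "\<forall>w'\<in>K2. (w',u) \<in> card_of K \<and> w' \<noteq> u \<and> j \<in> L w' \<longrightarrow> \<not> compat R le q (rr w')"
      using memN[OF qw] by blast
    obtain s where s: "s \<in> R" "le s p" "le s q" using pq unfolding compat_def by blast
    have vK: "v \<in> K" and uK: "u \<in> K" using v(2) u(2) K2K by blast+
    have rvR: "rr v \<in> R" and ruR: "rr u \<in> R" using rrR vK uK by blast+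
    have sv: "le s (rr v)" using le_trans'[OF s(1) v(3) rvR s(2) v(5)] .
    have su: "le s (rr u)" using le_trans'[OF s(1) u(3) ruR s(3) u(5)] .
    have cpu: "compat R le p (rr u)" unfolding compat_def using s(1,2) su by blast
    have cqv: "compat R le q (rr v)" unfolding compat_def using s(1,3) sv by blast
    have eq: "v = u" if "i = j"
    proof (rule ccontr)
      assume "v \<noteq> u"
      show False
      proof (cases "(u,v) \<in> card_of K")
        case True
        have "i \<in> L u" using u(6) that by simp
        hence "\<not> compat R le p (rr u)" using v(7) u(2) True `v \<noteq> u` by blast
        thus False using cpu by blast
      next
        case False
        hence "(v,u) \<in> card_of K" using co_total[OF vK uK] by blast
        moreover have "j \<in> L v" using v(6) that by simp
        ultimately have "\<not> compat R le q (rr v)" using u(7) v(2) `v \<noteq> u` by blast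
        thus False using cqv by blast
      qed
    qed
    have A: "i = j \<longrightarrow> x = w"
    proof
      assume "i = j"
      thus "x = w" using eq v(1) u(1) by simp
    qed
    have B: "i \<noteq> j \<longrightarrow> x \<inter> w = {}"
    proof (intro impI equalityI subsetI)
      fix t assume ne: "i \<noteq> j" and t: "t \<in> x \<inter> w"
      then obtain al be where ab: "al \<in> E v" "t \<in> y (fc v al i)" "be \<in> E u" "t \<in> y (fc u be j)"
        unfolding v(1) u(1) z_def by blast
      have alK: "al \<in> K" and beK: "be \<in> K" using EK[OF v(2)] EK[OF u(2)] ab(1,3) by blast+
      have I1: "fc v al i \<in> T al" using fc[OF v(2) ab(1)] v(6) by blast
      have I2: "fc u be j \<in> T be" using fc[OF u(2) ab(3)] u(6) by blast
      show "t \<in> {}"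
      proof (cases "fc v al i = fc u be j")
        case True
        have "al = be"
        proof (rule ccontr)
          assume "al \<noteq> be"
          hence "T al \<inter> T be = {}" using Tdisj alK beK by blast
          thus False using I1 I2 True by auto
        qed
        have "v = u"
        proof (rule ccontr)
          assume "v \<noteq> u"
          hence "E v \<inter> E u = {}" using Edisj v(2) u(2) by blast
          thus False using ab(1,3) `al = be` by blast
        qed
        have "fc v al i = fc v al j" using True `al = be` `v = u` by simp
        hence "i = j" using inj_onD[OF fc[OF v(2) ab(1), THEN conjunct1] _ v(6)] u(6) `v = u` by blast
        thus ?thesis using ne by blast
      next
        case False
        have "fc v al i \<in> Th" "fc u be j \<in> Th" using I1 I2 TTh alK beK by blast+
        hence "y (fc v al i) \<inter> y (fc u be j) = {}" using ydisj False by blast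
        thus ?thesis using ab(2,4) by blast
      qed
    qed simp
    have C: "Int_of a x \<inter> Int_of b w = {}"
    proof -
      obtain al be where ab: "al \<in> E v" "be \<in> E u"
        "Int_of a (y (fc v al i)) \<inter> Int_of b (y (fc u be j)) = {}"
      proof (cases "v = u")
        case True
        obtain al where al: "al \<in> E v" using Ene[OF v(2)] by blast
        have alK: "al \<in> K" using EK[OF v(2)] al by blast
        have "fc v al i \<in> T al" using fc[OF v(2) al] v(6) by blast
        moreover have "fc v al j \<in> T al" using fc[OF v(2) al] u(6) True by blast
        ultimately have "Int_of a (y (fc v al i)) \<inter> Int_of b (y (fc v al j)) = {}"
          using Torth[OF alK] by blast
        thus ?thesis using that[of al al] al True by blast
      next
        case False
        have "compat R le (rr v) (rr u)" unfolding compat_def using s(1) sv su by blast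
        then obtain al be where ab: "al \<in> E v" "be \<in> E u" "orth al be"
          using witE[OF v(2) u(2) False] by blast
        have "fc v al i \<in> T al" using fc[OF v(2) ab(1)] v(6) by blast
        moreover have "fc u be j \<in> T be" using fc[OF u(2) ab(2)] u(6) by blast
        ultimately have "Int_of a (y (fc v al i)) \<inter> Int_of b (y (fc u be j)) = {}"
          using ab(3) unfolding orth_def by blast
        thus ?thesis using that[of al be] ab(1,2) by blast
      qed
      have "Int_of a x \<subseteq> Int_of a (y (fc v al i))"
        using Int_of_mono[OF zsup[OF ab(1), of i]] v(1) by simp
      moreover have "Int_of b w \<subseteq> Int_of b (y (fc u be j))"
        using Int_of_mono[OF zsup[OF ab(2), of j]] u(1) by simp
      ultimately show ?thesis using ab(3) by blast
    qed
    show ?thesis using A B C by blast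
  qed
  have "forces_not_nice R le Th a b r"
    unfolding forces_not_nice_def
  proof (intro exI[of _ N] conjI)
    show "\<forall>i\<in>Th. \<forall>(p, x)\<in>N i. p \<in> R \<and> le p r \<and> finite x \<and> x \<subseteq> Th"
    proof (intro ballI)
      fix i px assume "i \<in> Th" "px \<in> N i"
      obtain p x where "px = (p,x)" by (cases px)
      thus "case px of (p, x) \<Rightarrow> p \<in> R \<and> le p r \<and> finite x \<and> x \<subseteq> Th"
        using P1[of p x i] `px \<in> N i` by simp
    qed
  next
    show "\<forall>i\<in>Th. \<forall>q\<in>R. le q r \<longrightarrow> (\<exists>(p, x)\<in>N i. compat R le q p)"
    proof (intro ballI impI)
      fix i q assume iq: "i \<in> Th" "q \<in> R" "le q r"
      obtain px where px: "px \<in> N i" "compat R le q (fst px)" using P2[OF iq] by blast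
      obtain p x where "px = (p,x)" by (cases px)
      thus "\<exists>(p, x)\<in>N i. compat R le q p" using px by (intro bexI[of _ px]) simp_all
    qed
  next
    show "\<forall>i\<in>Th. \<forall>j\<in>Th. \<forall>(p, x)\<in>N i. \<forall>(q, y)\<in>N j. compat R le p q \<longrightarrow>
            (i = j \<longrightarrow> x = y) \<and> (i \<noteq> j \<longrightarrow> x \<inter> y = {}) \<and>
            Int_of a x \<inter> Int_of b y = {}"
    proof (intro ballI)
      fix i j px assume ij: "i \<in> Th" "j \<in> Th" and px: "px \<in> N i"
      obtain p x where pxe: "px = (p,x)" by (cases px)
      have "\<forall>(q, y)\<in>N j. compat R le p q \<longrightarrow>
            (i = j \<longrightarrow> x = y) \<and> (i \<noteq> j \<longrightarrow> x \<inter> y = {}) \<and> Int_of a x \<inter> Int_of b y = {}"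
      proof (intro ballI)
        fix qw assume qw: "qw \<in> N j"
        obtain q w where qwe: "qw = (q,w)" by (cases qw)
        have "compat R le p q \<longrightarrow> (i = j \<longrightarrow> x = w) \<and> (i \<noteq> j \<longrightarrow> x \<inter> w = {}) \<and> Int_of a x \<inter> Int_of b w = {}"
          using P3[OF ij, of p x q w] px qw pxe qwe by blast
        thus "case qw of (q, y) \<Rightarrow> compat R le p q \<longrightarrow>
            (i = j \<longrightarrow> x = y) \<and> (i \<noteq> j \<longrightarrow> x \<inter> y = {}) \<and> Int_of a x \<inter> Int_of b y = {}"
          using qwe by simp
      qed
      thus "case px of (p, x) \<Rightarrow> \<forall>(q, y)\<in>N j. compat R le p q \<longrightarrow>
            (i = j \<longrightarrow> x = y) \<and> (i \<noteq> j \<longrightarrow> x \<inter> y = {}) \<and> Int_of a x \<inter> Int_of b y = {}"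
        using pxe by simp
    qed
  qed
  thus ?thesis unfolding dangerous_def using r(1) by blast
qed

end

theorem lemma2:
  fixes Th :: "'a set" and K :: "'k set" and thseq :: "'k \<Rightarrow> 'a set"
    and a b :: "'a \<Rightarrow> nat set" and R :: "'r set" and le :: "'r \<Rightarrow> 'r \<Rightarrow> bool"
  assumes theta_inf: "infinite Th"
    and kappa_cf: "is_cofinality Th K"
    and singular: "card_lt K Th"
    and uncountable_cf: "card_lt (UNIV :: nat set) K"
    and thseq_below: "\<forall>\<alpha>\<in>K. card_lt (thseq \<alpha>) Th"
    and thseq_incr: "\<forall>\<alpha>\<in>K. \<forall>\<beta>\<in>K. (\<alpha>, \<beta>) \<in> BNF_Cardinal_Order_Relation.card_of K \<and> \<alpha> \<noteq> \<beta> \<longrightarrow>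
                        card_lt (thseq \<alpha>) (thseq \<beta>)"
    and thseq_conv: "\<forall>Z. Z \<subseteq> Th \<and> card_lt Z Th \<longrightarrow> (\<exists>\<alpha>\<in>K. card_le Z (thseq \<alpha>))"
    and thseq_0: "\<forall>\<alpha>0\<in>K. (\<forall>\<beta>\<in>K. (\<alpha>0, \<beta>) \<in> BNF_Cardinal_Order_Relation.card_of K) \<longrightarrow> card_lt K (thseq \<alpha>0)"
    and pair: "theta_pair Th a b"
    and is_nice: "nice Th a b"
    and R_po: "partial_order_on' R le"
    and R_cc: "chain_cond R le K"
    and R_small: "card_lt R Th"
  shows "dangerous R le Th a b \<longleftrightarrow>
    (\<exists>y T. disj_fin_family Th y \<and> X_sequence Th K thseq a b y T \<and>
       \<not> chain_cond (R \<times> Q_set K a b y T) (prod_le le Q_le) K)"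
proof -
  have L: "L Th K thseq a b R le" by (rule L.intro[OF assms])
  show ?thesis
  proof
    assume "dangerous R le Th a b"
    thus "\<exists>y T. disj_fin_family Th y \<and> X_sequence Th K thseq a b y T \<and>
       \<not> chain_cond (R \<times> Q_set K a b y T) (prod_le le Q_le) K" by (rule L.fwd[OF L])
  next
    assume "\<exists>y T. disj_fin_family Th y \<and> X_sequence Th K thseq a b y T \<and>
       \<not> chain_cond (R \<times> Q_set K a b y T) (prod_le le Q_le) K"
    then obtain y T where h: "disj_fin_family Th y" "X_sequence Th K thseq a b y T"
       "\<not> chain_cond (R \<times> Q_set K a b y T) (prod_le le Q_le) K" by blast
    show "dangerous R le Th a b" by (rule L.bwd[OF L h])
  qed
qed

end
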